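(* Under the setting in the context, the matrices $Q_\beta$, $V_\beta$, $K_\beta$ satisfy $$\det(I-t\,V_\beta)=\det(I-t\,Q_\beta)\,\det(I-t\,K_\beta).$$
   Context: Setting. Let $I\subset\mathbb{R}$ be a compact interval and $f_i(x)=\rho_ix+\varrho_i$ ($i=1,\dots,n$), $0<|\rho_i|<1$, an IFS with the open set condition. Assume $I$ is the union of a nonempty open interval $I_h$ (the hole) and $f_1(I),\dots,f_n(I)$, with pairwise disjoint interiors and $I_h$ disjoint from the $f_i(I)$. Let $F(x)=f_i^{-1}(x)$ on $f_i(I)$. The laps $I_1,\dots,I_n$ (the $f_i(I)$ in left-to-right order) and the hole have endpoints $a_1<\dots<a_{n+2}$, hole $=(a_h,a_{h+1})$; interior endpoints are the turning/discontinuity points. Assume the forward orbit of every one-sided endpoint $a_i^\pm$ is finite (periodic, eventually periodic, or falling into the hole). Markov partition and $Q_\beta$: the points of these orbits together with the $a_i$, ordered, cut $I$ into intervals $J_1,\dots,J_m$; $A=[a_{ij}]$, $a_{ij}=1$ iff $F(\mathrm{int}J_j)\supseteq\mathrm{int}J_i$; $Q_\beta=[a_{ij}|F'|_{J_j}|^{-\beta}]$, $\beta\in\mathbb{R}$. Points $y^{(i)}$: list, ordered along $I$, the one-sided endpoints $a_1^+,a_2^-,a_2^+,\dots,a_{n+1}^-,a_{n+1}^+,a_{n+2}^-$ (each $a_i^-,a_i^+$ as two consecutive entries, $a_i^-$ first) together with all other points of the forward orbits of these one-sided endpoints; call them $y^{(1)},\dots,y^{(q)}$ and identify $y^{(i)}$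 with the $i$-th standard basis vector of $\mathbb{R}^q$. $V_\beta=[v_{ij}]$ ($q\times q$): for each $j$, if $F(y^{(j)})=y^{(i)}$ put $v_{ij}=\varepsilon(y^{(j)})|F'(y^{(j)})|^{-\beta}$, $\varepsilon$ the sign of $F'$ at $y^{(j)}$ (the column is zero if $y^{(j)}$ is a limit from inside the hole). Further, for every pair of consecutive entries that are the two one-sided versions of a turning/discontinuity point lying between $y^{(j)}$ and $y^{(i)}$: if $y^{(i)}>y^{(j)}$ and the pair is $y^{(k)},y^{(k+1)}$ with $j\le k<i$, put $v_{kj}=v_{ij}$, $v_{k+1,j}=-v_{ij}$; if $y^{(i)}<y^{(j)}$ and the pair is $y^{(k-1)},y^{(k)}$ with $i<k\le j$, put $v_{k-1,j}=-v_{ij}$, $v_{kj}=v_{ij}$. All other entries are $0$. $K_\beta$ is the $n\times n$ diagonal matrix with $k_{ii}=\varepsilon(I_i)|F'|_{I_i}|^{-\beta}$, $\varepsilon(I_i)$ the sign of $F'$ on lap $I_i$. *)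

theory Defs
  imports "HOL-Analysis.Analysis" "Jordan_Normal_Form.Determinant"
begin

(* The interval I = [a 1, a (n+2)]; endpoints a 1 < ... < a (n+2) (1-based);
   hole = (a h, a (h+1)).  One-sided points are pairs (x, s) with
   s = True meaning x^+ (limit from the right), s = False meaning x^-. *)

definition ifs :: "(nat \<Rightarrow> real) \<Rightarrow> (nat \<Rightarrow> real) \<Rightarrow> nat \<Rightarrow> real \<Rightarrow> real" where
  "ifs rho vr i x = rho i * x + vr i"

definition Ival :: "nat \<Rightarrow> (nat \<Rightarrow> real) \<Rightarrow> real set" where
  "Ival n a = {a 1 .. a (n+2)}"

definition side_in :: "real set \<Rightarrow> real \<Rightarrow> bool \<Rightarrow> bool" where
  "side_in S x s = (\<exists>\<delta>>0. (if s then {x .. x + \<delta>} else {x - \<delta> .. x}) \<subseteq> S)"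

definition has_lap :: "nat \<Rightarrow> (nat \<Rightarrow> real) \<Rightarrow> (nat \<Rightarrow> real) \<Rightarrow> (nat \<Rightarrow> real) \<Rightarrow> real \<times> bool \<Rightarrow> bool" where
  "has_lap n rho vr a p = (\<exists>i\<in>{1..n}. side_in (ifs rho vr i ` Ival n a) (fst p) (snd p))"

definition lap_of :: "nat \<Rightarrow> (nat \<Rightarrow> real) \<Rightarrow> (nat \<Rightarrow> real) \<Rightarrow> (nat \<Rightarrow> real) \<Rightarrow> real \<times> bool \<Rightarrow> nat" where
  "lap_of n rho vr a p = (THE i. i \<in> {1..n} \<and> side_in (ifs rho vr i ` Ival n a) (fst p) (snd p))"

text \<open>F = f_i^{-1} applied to a one-sided point; the side flips when F is decreasing.
  None if the one-sided point is not in a lap (limit from inside the hole, point of the hole).\<close>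
definition Fpt :: "nat \<Rightarrow> (nat \<Rightarrow> real) \<Rightarrow> (nat \<Rightarrow> real) \<Rightarrow> (nat \<Rightarrow> real) \<Rightarrow> real \<times> bool \<Rightarrow> (real \<times> bool) option" where
  "Fpt n rho vr a p =
     (if has_lap n rho vr a p then
        (let i = lap_of n rho vr a p in
           Some ((fst p - vr i) / rho i, if rho i > 0 then snd p else \<not> snd p))
      else None)"

definition Fderiv_pt :: "nat \<Rightarrow> (nat \<Rightarrow> real) \<Rightarrow> (nat \<Rightarrow> real) \<Rightarrow> (nat \<Rightarrow> real) \<Rightarrow> real \<times> bool \<Rightarrow> real" where
  "Fderiv_pt n rho vr a p = 1 / rho (lap_of n rho vr a p)"

text \<open>Points other than the a_k are ordinary (two-sided) points; we represent them with side True.\<close>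
definition canon :: "nat \<Rightarrow> (nat \<Rightarrow> real) \<Rightarrow> real \<times> bool \<Rightarrow> real \<times> bool" where
  "canon n a p = (if fst p \<in> a ` {1..n+2} then p else (fst p, True))"

definition init_pts :: "nat \<Rightarrow> (nat \<Rightarrow> real) \<Rightarrow> (real \<times> bool) set" where
  "init_pts n a = {(a k, True) | k. k \<in> {1..n+1}} \<union> {(a k, False) | k. k \<in> {2..n+2}}"

definition step_rel :: "nat \<Rightarrow> (nat \<Rightarrow> real) \<Rightarrow> (nat \<Rightarrow> real) \<Rightarrow> (nat \<Rightarrow> real) \<Rightarrow> ((real \<times> bool) \<times> (real \<times> bool)) set" where
  "step_rel n rho vr a = {(p, canon n a q) | p q. Fpt n rho vr a p = Some q}"

definition orbit :: "nat \<Rightarrow> (nat \<Rightarrow> real) \<Rightarrow> (nat \<Rightarrow> real) \<Rightarrow> (nat \<Rightarrow> real) \<Rightarrow> real \<times> bool \<Rightarrow> (real \<times> bool) set" where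
  "orbit n rho vr a p0 = {p. (p0, p) \<in> (step_rel n rho vr a)\<^sup>*}"

definition Ypts :: "nat \<Rightarrow> (nat \<Rightarrow> real) \<Rightarrow> (nat \<Rightarrow> real) \<Rightarrow> (nat \<Rightarrow> real) \<Rightarrow> (real \<times> bool) set" where
  "Ypts n rho vr a = (\<Union>p0\<in>init_pts n a. orbit n rho vr a p0)"

definition pt_less :: "real \<times> bool \<Rightarrow> real \<times> bool \<Rightarrow> bool" where
  "pt_less p r = (fst p < fst r \<or> (fst p = fst r \<and> \<not> snd p \<and> snd r))"

definition pt_le :: "real \<times> bool \<Rightarrow> real \<times> bool \<Rightarrow> bool" where
  "pt_le p r = (p = r \<or> pt_less p r)"

definition nth_pt :: "(real \<times> bool) set \<Rightarrow> nat \<Rightarrow> real \<times> bool" where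
  "nth_pt Y k = (THE p. p \<in> Y \<and> card {r \<in> Y. pt_less r p} = k)"

definition turning :: "nat \<Rightarrow> (nat \<Rightarrow> real) \<Rightarrow> real set" where
  "turning n a = a ` {2..n+1}"

text \<open>Entry of V_beta in the row of point r and the column of point p (additive reading).\<close>
definition V_entry :: "nat \<Rightarrow> (nat \<Rightarrow> real) \<Rightarrow> (nat \<Rightarrow> real) \<Rightarrow> (nat \<Rightarrow> real) \<Rightarrow> real \<Rightarrow>
    real \<times> bool \<Rightarrow> real \<times> bool \<Rightarrow> real" where
  "V_entry n rho vr a \<beta> r p =
     (case Fpt n rho vr a p of
        None \<Rightarrow> 0
      | Some q0 \<Rightarrow>
          (let q = canon n a q0;
               d = Fderiv_pt n rho vr a p;
               v = sgn d * \<bar>d\<bar> powr (- \<beta>);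
               inside = (\<lambda>x. if pt_less p q then pt_le p x \<and> pt_le x q else pt_le q x \<and> pt_le x p)
           in (if r = q then v else 0)
              + (if fst r \<in> turning n a \<and> inside (fst r, False) \<and> inside (fst r, True)
                 then (if snd r then -1 else 1) * (if pt_less p q then v else - v)
                 else 0)))"

definition Vmat :: "nat \<Rightarrow> (nat \<Rightarrow> real) \<Rightarrow> (nat \<Rightarrow> real) \<Rightarrow> (nat \<Rightarrow> real) \<Rightarrow> real \<Rightarrow> real mat" where
  "Vmat n rho vr a \<beta> =
     (let Y = Ypts n rho vr a
      in mat (card Y) (card Y) (\<lambda>(i, j). V_entry n rho vr a \<beta> (nth_pt Y i) (nth_pt Y j)))"

definition part_pts :: "nat \<Rightarrow> (nat \<Rightarrow> real) \<Rightarrow> (nat \<Rightarrow> real) \<Rightarrow> (nat \<Rightarrow> real) \<Rightarrow> real set" where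
  "part_pts n rho vr a = fst ` Ypts n rho vr a \<union> a ` {1..n+2}"

definition nth_real :: "real set \<Rightarrow> nat \<Rightarrow> real" where
  "nth_real P k = (THE x. x \<in> P \<and> card {y \<in> P. y < x} = k)"

definition F_img :: "nat \<Rightarrow> (nat \<Rightarrow> real) \<Rightarrow> (nat \<Rightarrow> real) \<Rightarrow> (nat \<Rightarrow> real) \<Rightarrow> real set \<Rightarrow> real set" where
  "F_img n rho vr a S =
     {y. \<exists>x\<in>S. \<exists>i\<in>{1..n}. x \<in> interior (ifs rho vr i ` Ival n a) \<and> y = (x - vr i) / rho i}"

definition lap_of_set :: "nat \<Rightarrow> (nat \<Rightarrow> real) \<Rightarrow> (nat \<Rightarrow> real) \<Rightarrow> (nat \<Rightarrow> real) \<Rightarrow> real set \<Rightarrow> nat" where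
  "lap_of_set n rho vr a S = (THE i. i \<in> {1..n} \<and> S \<subseteq> ifs rho vr i ` Ival n a)"

text \<open>Q_beta, indexed 0-based by the intervals J_j = [p_j, p_{j+1}] of the Markov partition.\<close>
definition Qmat :: "nat \<Rightarrow> (nat \<Rightarrow> real) \<Rightarrow> (nat \<Rightarrow> real) \<Rightarrow> (nat \<Rightarrow> real) \<Rightarrow> real \<Rightarrow> real mat" where
  "Qmat n rho vr a \<beta> =
     (let P = part_pts n rho vr a;
          m = card P - 1;
          intJ = (\<lambda>j. {nth_real P j <..< nth_real P (Suc j)})
      in mat m m (\<lambda>(i, j).
           (if intJ i \<subseteq> F_img n rho vr a (intJ j) then 1 else 0)
           * \<bar>1 / rho (lap_of_set n rho vr a (intJ j))\<bar> powr (- \<beta>)))"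

text \<open>k-th lap (0-based, left to right) is [a k', a (k'+1)], skipping the hole index h.\<close>
definition lap_left :: "nat \<Rightarrow> nat \<Rightarrow> nat" where
  "lap_left h k = (if Suc k < h then Suc k else Suc (Suc k))"

definition lap_ifs :: "nat \<Rightarrow> (nat \<Rightarrow> real) \<Rightarrow> (nat \<Rightarrow> real) \<Rightarrow> (nat \<Rightarrow> real) \<Rightarrow> nat \<Rightarrow> nat \<Rightarrow> nat" where
  "lap_ifs n rho vr a h k =
     (THE i. i \<in> {1..n} \<and> ifs rho vr i ` Ival n a = {a (lap_left h k) .. a (Suc (lap_left h k))})"

definition Kmat :: "nat \<Rightarrow> (nat \<Rightarrow> real) \<Rightarrow> (nat \<Rightarrow> real) \<Rightarrow> (nat \<Rightarrow> real) \<Rightarrow> nat \<Rightarrow> real \<Rightarrow> real mat" where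
  "Kmat n rho vr a h \<beta> =
     mat n n (\<lambda>(i, j). if i = j then
        (let d = 1 / rho (lap_ifs n rho vr a h i) in sgn d * \<bar>d\<bar> powr (- \<beta>))
      else 0)"

end

theory Submission
  imports Defs
begin


definition Vf :: "nat \<Rightarrow> nat \<Rightarrow> (nat \<Rightarrow> real) \<Rightarrow> (nat \<Rightarrow> bool) \<Rightarrow> nat \<Rightarrow> nat \<Rightarrow> real" where
  "Vf m hh w \<epsilon> r c =
    (if c div 2 = hh then 0 else
      (let qc = (if (even c \<longleftrightarrow> \<epsilon> (c div 2)) then 0 else 2*m - 1);
           \<sigma> = (if 1 \<le> r \<and> r \<le> 2*m - 2 then (if even r then -1 else 1) else (0::real));
           \<gamma> = (if even r then r else r + 1)
       in w (c div 2) * ((if r = qc then 1 else 0) +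
            \<sigma> * ((if \<gamma> \<le> qc then 1 else 0) - (if \<gamma> \<le> c then 1 else 0)))))"

definition qcf :: "nat \<Rightarrow> (nat \<Rightarrow> bool) \<Rightarrow> nat \<Rightarrow> nat" where
  "qcf m \<epsilon> c = (if (even c \<longleftrightarrow> \<epsilon> (c div 2)) then 0 else 2*m - 1)"

lemma Vf_even:
  assumes "2 \<le> m" "k < m"
  shows "Vf m hh w \<epsilon> (2*k) c = (if c div 2 = hh then 0 else w (c div 2) *
     ((if 2*k = qcf m \<epsilon> c then 1 else 0) + (if 1 \<le> k then -1 else 0) *
        ((if 2*k \<le> qcf m \<epsilon> c then 1 else 0) - (if 2*k \<le> c then 1 else 0))))"
proof -
  have "(1 \<le> 2*k \<and> 2*k \<le> 2*m - 2) = (1 \<le> k)" using assms by auto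
  then show ?thesis unfolding Vf_def Let_def qcf_def by simp
qed

lemma Vf_odd:
  assumes "2 \<le> m" "k < m"
  shows "Vf m hh w \<epsilon> (2*k+1) c = (if c div 2 = hh then 0 else w (c div 2) *
     ((if 2*k+1 = qcf m \<epsilon> c then 1 else 0) + (if k + 2 \<le> m then 1 else 0) *
        ((if 2*k+2 \<le> qcf m \<epsilon> c then 1 else 0) - (if 2*k+2 \<le> c then 1 else 0))))"
proof -
  have "(1 \<le> 2*k+1 \<and> 2*k+1 \<le> 2*m - 2) = (k + 2 \<le> m)" using assms by auto
  then show ?thesis unfolding Vf_def Let_def qcf_def by simp
qed

lemma Vf_a:
  assumes m2: "2 \<le> m" and i: "i < m" and j: "j < m" and "j \<noteq> hh" and aw: "\<bar>w j\<bar> = (if \<epsilon> j then w j else - w j)"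
  shows "Vf m hh w \<epsilon> (2*i+1) (2*j+1) - Vf m hh w \<epsilon> (2*i+1) (2*j) = \<bar>w j\<bar>"
proof -
  have d1: "(2*j+1) div 2 = j" "(2*j) div 2 = j" by simp_all
  have pe: "(2*i+2 \<le> 2*j+1) = (2*i+2 \<le> 2*j)" by presburger
  have q1: "qcf m \<epsilon> (2*j+1) = (if \<epsilon> j then 2*m-1 else 0)" unfolding qcf_def by simp
  have q2: "qcf m \<epsilon> (2*j) = (if \<epsilon> j then 0 else 2*m-1)" unfolding qcf_def by simp
  define X where "X = ((if 2*i+1 = 2*m-1 then 1 else 0) + (if i + 2 \<le> m then 1 else 0) *
        ((if 2*i+2 \<le> 2*m-1 then 1 else 0) - (if 2*i+2 \<le> 2*j then 1 else 0)) :: real)"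
  define Y where "Y = ((if 2*i+1 = 0 then 1 else 0) + (if i + 2 \<le> m then 1 else 0) *
        ((if 2*i+2 \<le> (0::nat) then 1 else 0) - (if 2*i+2 \<le> 2*j then 1 else 0)) :: real)"
  have E: "X - Y = 1"
    unfolding X_def Y_def using i m2 by (cases "i + 2 \<le> m") auto
  have V1: "Vf m hh w \<epsilon> (2*i+1) (2*j+1) = w j * (if \<epsilon> j then X else Y)"
    unfolding Vf_odd[OF m2 i] d1 q1 X_def Y_def pe using assms(4) by simp
  have V2: "Vf m hh w \<epsilon> (2*i+1) (2*j) = w j * (if \<epsilon> j then Y else X)"
    unfolding Vf_odd[OF m2 i] d1 q2 X_def Y_def using assms(4) by simp
  have "X = Y + 1" using E by simp
  then show ?thesis unfolding V1 V2 using aw by (simp add: algebra_simps)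
qed

lemma ind_id:
  fixes q c k m :: nat
  assumes "2 \<le> m" "k < m" "c < 2*m" "q = 0 \<or> q = 2*m - 1"
  shows "((if 2*k = q then 1 else 0) + (if 1 \<le> k then -1 else 0) *
        ((if 2*k \<le> q then 1 else 0) - (if 2*k \<le> c then 1 else 0)))
      + ((if 2*k+1 = q then 1 else 0) + (if k + 2 \<le> m then 1 else 0) *
        ((if 2*k+2 \<le> q then 1 else 0) - (if 2*k+2 \<le> c then 1 else 0)))
      = (if c div 2 = k then 1 else (0::real))"
proof -
  have "c div 2 = k \<longleftrightarrow> 2*k \<le> c \<and> c < 2*k+2" by auto
  then show ?thesis using assms
    by (cases "k = 0"; cases "k + 1 = m"; auto)
qed

lemma Vf_c:
  assumes "2 \<le> m" "k < m" "c < 2*m"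
  shows "Vf m hh w \<epsilon> (2*k) c + Vf m hh w \<epsilon> (2*k+1) c
     = (if c div 2 = k then (if k = hh then 0 else w k) else 0)"
proof (cases "c div 2 = hh")
  case True then show ?thesis using assms by (auto simp add: Vf_def)
next
  case False
  have q: "qcf m \<epsilon> c = 0 \<or> qcf m \<epsilon> c = 2*m - 1" unfolding qcf_def by auto
  have "Vf m hh w \<epsilon> (2*k) c + Vf m hh w \<epsilon> (2*k+1) c = w (c div 2) *
     (((if 2*k = qcf m \<epsilon> c then 1 else 0) + (if 1 \<le> k then -1 else 0) *
        ((if 2*k \<le> qcf m \<epsilon> c then 1 else 0) - (if 2*k \<le> c then 1 else 0)))
      + ((if 2*k+1 = qcf m \<epsilon> c then 1 else 0) + (if k + 2 \<le> m then 1 else 0) *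
        ((if 2*k+2 \<le> qcf m \<epsilon> c then 1 else 0) - (if 2*k+2 \<le> c then 1 else 0))))"
    unfolding Vf_even[OF assms(1,2)] Vf_odd[OF assms(1,2)] using False by (simp add: distrib_left)
  also have "\<dots> = w (c div 2) * (if c div 2 = k then 1 else 0)"
    using ind_id[OF assms q] by simp
  finally show ?thesis using False by auto
qed

lemma Vf_hole: "c div 2 = hh \<Longrightarrow> Vf m hh w \<epsilon> r c = 0"
  by (simp add: Vf_def)

definition Smat :: "nat \<Rightarrow> real mat" where
  "Smat m = mat (2*m) (2*m) (\<lambda>(c,j). if j < m then (if c = 2*j+1 then 1 else 0) - (if c = 2*j then 1 else 0)
      else (if c = 2*(j-m) then 1 else 0))"

definition Tmat :: "nat \<Rightarrow> real mat" where
  "Tmat m = mat (2*m) (2*m) (\<lambda>(i,r). if i < m then (if r = 2*i+1 then 1 else 0)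
      else (if r div 2 = i - m then 1 else 0))"

lemma mult_entry:
  assumes "A \<in> carrier_mat nr k" "B \<in> carrier_mat k nc" "i < nr" "j < nc"
  shows "(A * B) $$ (i,j) = (\<Sum>l<k. A $$ (i,l) * B $$ (l,j))"
  using assms by (simp add: scalar_prod_def lessThan_atLeast0)

lemma sum_ind:
  fixes f :: "nat \<Rightarrow> real"
  assumes "a < N"
  shows "(\<Sum>l<N. f l * (if l = a then 1 else 0)) = f a"
proof -
  have "(\<Sum>l<N. f l * (if l = a then 1 else 0)) = (\<Sum>l<N. if l = a then f a else 0)"
    by (rule sum.cong) auto
  then show ?thesis using assms by simp
qed

lemma sum_div2:
  fixes f :: "nat \<Rightarrow> real"
  assumes "k < m"
  shows "(\<Sum>r<2*m. (if r div 2 = k then 1 else 0) * f r) = f (2*k) + f (2*k+1)"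
proof -
  have "(\<Sum>r<2*m. (if r div 2 = k then 1 else 0) * f r) = (\<Sum>r<2*m. if r div 2 = k then f r else 0)"
    by (rule sum.cong) auto
  also have "\<dots> = sum f {r\<in>{..<2*m}. r div 2 = k}"
    by (rule sum.inter_filter[symmetric]) simp
  also have "{r\<in>{..<2*m}. r div 2 = k} = {2*k, 2*k+1}"
    using assms by auto
  finally show ?thesis by simp
qed

lemma Smat_carrier[simp]: "Smat m \<in> carrier_mat (2*m) (2*m)"
  and Tmat_carrier[simp]: "Tmat m \<in> carrier_mat (2*m) (2*m)"
  by (auto simp: Smat_def Tmat_def)

lemma Smat_dim[simp]: "dim_row (Smat m) = 2*m" "dim_col (Smat m) = 2*m"
  and Tmat_dim[simp]: "dim_row (Tmat m) = 2*m" "dim_col (Tmat m) = 2*m"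
  by (auto simp: Smat_def Tmat_def)

lemma WS_entry:
  assumes W: "W \<in> carrier_mat (2*m) (2*m)" and r: "r < 2*m" and j: "j < 2*m"
  shows "(W * Smat m) $$ (r,j) = (if j < m then W $$ (r, 2*j+1) - W $$ (r, 2*j) else W $$ (r, 2*(j-m)))"
proof -
  have e: "(W * Smat m) $$ (r,j) = (\<Sum>l<2*m. W $$ (r,l) * Smat m $$ (l,j))"
    by (rule mult_entry[OF W Smat_carrier r j])
  show ?thesis
  proof (cases "j < m")
    case True
    have "(\<Sum>l<2*m. W $$ (r,l) * Smat m $$ (l,j)) =
        (\<Sum>l<2*m. W $$ (r,l) * (if l = 2*j+1 then 1 else 0)) - (\<Sum>l<2*m. W $$ (r,l) * (if l = 2*j then 1 else 0))"
      unfolding sum_subtractf[symmetric]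
      by (rule sum.cong) (use True j in \<open>auto simp: Smat_def\<close>)
    also have "\<dots> = W $$ (r, 2*j+1) - W $$ (r, 2*j)"
      using True by (simp add: sum_ind)
    finally show ?thesis using e True by simp
  next
    case False
    have "(\<Sum>l<2*m. W $$ (r,l) * Smat m $$ (l,j)) =
        (\<Sum>l<2*m. W $$ (r,l) * (if l = 2*(j-m) then 1 else 0))"
      by (rule sum.cong) (use False j in \<open>auto simp: Smat_def\<close>)
    also have "\<dots> = W $$ (r, 2*(j-m))"
      using False j by (intro sum_ind) auto
    finally show ?thesis using e False by simp
  qed
qed

lemma TX_entry:
  assumes X: "X \<in> carrier_mat (2*m) (2*m)" and i: "i < 2*m" and j: "j < 2*m"
  shows "(Tmat m * X) $$ (i,j) = (if i < m then X $$ (2*i+1, j) else X $$ (2*(i-m), j) + X $$ (2*(i-m)+1, j))"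
proof -
  have e: "(Tmat m * X) $$ (i,j) = (\<Sum>l<2*m. Tmat m $$ (i,l) * X $$ (l,j))"
    by (rule mult_entry[OF Tmat_carrier X i j])
  show ?thesis
  proof (cases "i < m")
    case True
    have "(\<Sum>l<2*m. Tmat m $$ (i,l) * X $$ (l,j)) = (\<Sum>l<2*m. X $$ (l,j) * (if l = 2*i+1 then 1 else 0))"
      by (rule sum.cong) (use True i in \<open>auto simp: Tmat_def\<close>)
    also have "\<dots> = X $$ (2*i+1, j)"
      using True by (intro sum_ind) auto
    finally show ?thesis using e True by simp
  next
    case False
    have "(\<Sum>l<2*m. Tmat m $$ (i,l) * X $$ (l,j)) = (\<Sum>l<2*m. (if l div 2 = i - m then 1 else 0) * X $$ (l,j))"
      by (rule sum.cong) (use False i in \<open>auto simp: Tmat_def\<close>)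
    also have "\<dots> = X $$ (2*(i-m), j) + X $$ (2*(i-m)+1, j)"
      using False i by (intro sum_div2) auto
    finally show ?thesis using e False by simp
  qed
qed

lemma TWS_entry:
  assumes W: "W \<in> carrier_mat (2*m) (2*m)" and i: "i < 2*m" and j: "j < 2*m"
  shows "(Tmat m * (W * Smat m)) $$ (i,j) =
    (let f = (\<lambda>r. if j < m then W $$ (r, 2*j+1) - W $$ (r, 2*j) else W $$ (r, 2*(j-m)))
     in if i < m then f (2*i+1) else f (2*(i-m)) + f (2*(i-m)+1))"
proof -
  have X: "W * Smat m \<in> carrier_mat (2*m) (2*m)" using W by simp
  show ?thesis
    unfolding TX_entry[OF X i j] Let_def
    using i j by (simp add: WS_entry[OF W])
qed

lemma TS_one: "Tmat m * Smat m = 1\<^sub>m (2*m)"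
proof -
  have "Tmat m * Smat m = Tmat m * (1\<^sub>m (2*m) * Smat m)"
    using left_mult_one_mat[OF Smat_carrier[of m]] by simp
  also have "\<dots> = 1\<^sub>m (2*m)"
  proof (rule eq_matI)
    fix i j assume i: "i < dim_row (1\<^sub>m (2*m) :: real mat)" and j: "j < dim_col (1\<^sub>m (2*m) :: real mat)"
    then have i': "i < 2*m" and j': "j < 2*m" by auto
    show "(Tmat m * (1\<^sub>m (2*m) * Smat m)) $$ (i,j) = 1\<^sub>m (2*m) $$ (i,j)"
      unfolding TWS_entry[OF one_carrier_mat i' j'] Let_def
      using i' j' by (auto; presburger)
  qed (auto simp: Smat_def Tmat_def)
  finally show ?thesis .
qed

definition Qf :: "nat \<Rightarrow> nat \<Rightarrow> (nat \<Rightarrow> real) \<Rightarrow> real mat" where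
  "Qf m hh w = mat m m (\<lambda>(i,j). if j = hh then 0 else \<bar>w j\<bar>)"

definition Dm :: "nat \<Rightarrow> nat \<Rightarrow> (nat \<Rightarrow> real) \<Rightarrow> real mat" where
  "Dm m hh w = mat m m (\<lambda>(i,j). if i = j then (if i = hh then 0 else w i) else 0)"

theorem core_det:
  assumes m2: "2 \<le> m"
    and absw: "\<forall>j<m. j \<noteq> hh \<longrightarrow> \<bar>w j\<bar> = (if \<epsilon> j then w j else - w j)"
  shows "det (1\<^sub>m (2*m) - t \<cdot>\<^sub>m mat (2*m) (2*m) (\<lambda>(r,c). Vf m hh w \<epsilon> r c))
       = det (1\<^sub>m m - t \<cdot>\<^sub>m Qf m hh w) * (\<Prod>s<m. 1 - t * (if s = hh then 0 else w s))"
proof -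
  define V where "V = mat (2*m) (2*m) (\<lambda>(r,c). Vf m hh w \<epsilon> r c)"
  define W where "W = 1\<^sub>m (2*m) - t \<cdot>\<^sub>m V"
  have Wc: "W \<in> carrier_mat (2*m) (2*m)" unfolding W_def V_def
    by (intro minus_carrier_mat smult_carrier_mat) simp
  have We: "W $$ (r,c) = (if r = c then 1 else 0) - t * Vf m hh w \<epsilon> r c" if "r < 2*m" "c < 2*m" for r c
  proof -
    have "W $$ (r,c) = 1\<^sub>m (2*m) $$ (r,c) - (t \<cdot>\<^sub>m V) $$ (r,c)"
      unfolding W_def by (rule index_minus_mat(1)) (use that in \<open>simp_all add: V_def\<close>)
    also have "(t \<cdot>\<^sub>m V) $$ (r,c) = t * V $$ (r,c)"
      by (rule index_smult_mat(1)) (use that in \<open>simp_all add: V_def\<close>)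
    also have "V $$ (r,c) = Vf m hh w \<epsilon> r c"
      unfolding V_def using that by (simp only: index_mat(1) case_prod_conv)
    finally show ?thesis using that by (simp only: index_one_mat(1))
  qed
  define M where "M = Tmat m * (W * Smat m)"
  have d1: "det M = det (Tmat m) * det (W * Smat m)"
    unfolding M_def by (rule det_mult[OF Tmat_carrier mult_carrier_mat[OF Wc Smat_carrier]])
  have d2: "det (W * Smat m) = det W * det (Smat m)"
    by (rule det_mult[OF Wc Smat_carrier])
  have d3: "det (Tmat m) * det (Smat m) = 1"
    using det_mult[OF Tmat_carrier[of m] Smat_carrier[of m]] TS_one[of m] by simp
  have detM: "det M = det W"
  proof -
    have "det M = det W * (det (Tmat m) * det (Smat m))" unfolding d1 d2 by (simp only: mult_ac)
    then show ?thesis unfolding d3 by simp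
  qed
  define A2 where "A2 = mat m m (\<lambda>(i,j). M $$ (i, j+m))"
  have blocks: "M = four_block_mat (1\<^sub>m m - t \<cdot>\<^sub>m Qf m hh w) A2 (0\<^sub>m m m) (1\<^sub>m m - t \<cdot>\<^sub>m Dm m hh w)"
  proof (rule eq_matI)
    have dM: "dim_row M = 2*m" "dim_col M = 2*m" unfolding M_def by auto
    fix i j assume i0: "i < dim_row (four_block_mat (1\<^sub>m m - t \<cdot>\<^sub>m Qf m hh w) A2 (0\<^sub>m m m) (1\<^sub>m m - t \<cdot>\<^sub>m Dm m hh w))"
      and j0: "j < dim_col (four_block_mat (1\<^sub>m m - t \<cdot>\<^sub>m Qf m hh w) A2 (0\<^sub>m m m) (1\<^sub>m m - t \<cdot>\<^sub>m Dm m hh w))"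
    have i: "i < 2*m" and j: "j < 2*m" using i0 j0 by (auto simp: Qf_def Dm_def A2_def)
    have Me: "M $$ (i,j) = (let f = (\<lambda>r. if j < m then W $$ (r, 2*j+1) - W $$ (r, 2*j) else W $$ (r, 2*(j-m)))
     in if i < m then f (2*i+1) else f (2*(i-m)) + f (2*(i-m)+1))"
      unfolding M_def by (rule TWS_entry[OF Wc i j])
    show "M $$ (i,j) = four_block_mat (1\<^sub>m m - t \<cdot>\<^sub>m Qf m hh w) A2 (0\<^sub>m m m) (1\<^sub>m m - t \<cdot>\<^sub>m Dm m hh w) $$ (i,j)"
    proof (cases "i < m")
      case iT: True
      show ?thesis
      proof (cases "j < m")
        case jT: True
        have "2*i+1 \<noteq> 2*j" by presburger
        have "M $$ (i,j) = ((if i = j then 1 else 0) - t * Vf m hh w \<epsilon> (2*i+1) (2*j+1))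
              - (0 - t * Vf m hh w \<epsilon> (2*i+1) (2*j))"
          unfolding Me Let_def using iT jT \<open>2*i+1 \<noteq> 2*j\<close> by (simp add: We)
        also have "\<dots> = (if i = j then 1 else 0) - t * (if j = hh then 0 else \<bar>w j\<bar>)"
        proof (cases "j = hh")
          case True then show ?thesis by (simp add: Vf_hole)
        next
          case False
          have "Vf m hh w \<epsilon> (2*i+1) (2*j+1) - Vf m hh w \<epsilon> (2*i+1) (2*j) = \<bar>w j\<bar>"
            using Vf_a[OF m2 iT jT False] absw jT False by simp
          then show ?thesis using False by (simp add: algebra_simps)
        qed
        finally show ?thesis using iT jT by (simp add: Qf_def)
      next
        case jF: False
        have "M $$ (i,j) = A2 $$ (i, j - m)" using iT jF j by (simp add: A2_def)
        then show ?thesis using iT jF j by (simp add: Qf_def Dm_def)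
      qed
    next
      case iF: False
      define k where "k = i - m"
      have k: "k < m" using i iF k_def by auto
      have ik: "i - m = k" using k_def by simp
      show ?thesis
      proof (cases "j < m")
        case jT: True
        have c1: "Vf m hh w \<epsilon> (2*k) (2*j+1) + Vf m hh w \<epsilon> (2*k+1) (2*j+1) = (if j = k then (if k = hh then 0 else w k) else 0)"
          using Vf_c[OF m2 k, of "2*j+1"] jT by simp
        have c2: "Vf m hh w \<epsilon> (2*k) (2*j) + Vf m hh w \<epsilon> (2*k+1) (2*j) = (if j = k then (if k = hh then 0 else w k) else 0)"
          using Vf_c[OF m2 k, of "2*j"] jT by simp
        have "M $$ (i,j) = ((if 2*k = 2*j+1 then 1 else 0) - t * Vf m hh w \<epsilon> (2*k) (2*j+1))
              - ((if 2*k = 2*j then 1 else 0) - t * Vf m hh w \<epsilon> (2*k) (2*j))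
              + (((if 2*k+1 = 2*j+1 then 1 else 0) - t * Vf m hh w \<epsilon> (2*k+1) (2*j+1))
              - ((if 2*k+1 = 2*j then 1 else 0) - t * Vf m hh w \<epsilon> (2*k+1) (2*j)))"
          unfolding Me Let_def ik using iF jT k by (simp add: We del: One_nat_def)
        also have "\<dots> = - t * ((Vf m hh w \<epsilon> (2*k) (2*j+1) + Vf m hh w \<epsilon> (2*k+1) (2*j+1))
              - (Vf m hh w \<epsilon> (2*k) (2*j) + Vf m hh w \<epsilon> (2*k+1) (2*j)))"
        proof -
          have e1: "(2*k = 2*j+1) = False" "(2*k+1 = 2*j) = False" by presburger+
          have e2: "(2*k+1 = 2*j+1) = (2*k = 2*j)" by simp
          show ?thesis unfolding e1 e2 by (simp add: algebra_simps)
        qed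
        also have "\<dots> = 0" unfolding c1 c2 by simp
        finally show ?thesis using iF jT i by (simp add: Qf_def Dm_def)
      next
        case jF: False
        define l where "l = j - m"
        have l: "l < m" using j jF l_def by auto
        have jl: "j - m = l" using l_def by simp
        have c1: "Vf m hh w \<epsilon> (2*k) (2*l) + Vf m hh w \<epsilon> (2*k+1) (2*l) = (if l = k then (if k = hh then 0 else w k) else 0)"
          using Vf_c[OF m2 k, of "2*l"] l by simp
        have "M $$ (i,j) = ((if 2*k = 2*l then 1 else 0) - t * Vf m hh w \<epsilon> (2*k) (2*l))
              + ((if 2*k+1 = 2*l then 1 else 0) - t * Vf m hh w \<epsilon> (2*k+1) (2*l))"
          unfolding Me Let_def ik jl using iF jF k l by (simp add: We del: One_nat_def)
        also have "\<dots> = (if k = l then 1 else 0) - t * (Vf m hh w \<epsilon> (2*k) (2*l) + Vf m hh w \<epsilon> (2*k+1) (2*l))"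
        proof -
          have e1: "(2*k+1 = 2*l) = False" by presburger
          have e2: "(2*k = 2*l) = (k = l)" by simp
          show ?thesis unfolding e1 e2 by (simp add: algebra_simps)
        qed
        also have "\<dots> = (if k = l then 1 else 0) - t * (if l = k then (if k = hh then 0 else w k) else 0)"
          unfolding c1 by simp
        finally have Mij: "M $$ (i,j) = (if k = l then 1 else 0) - t * (if l = k then (if k = hh then 0 else w k) else 0)" .
        moreover have "four_block_mat (1\<^sub>m m - t \<cdot>\<^sub>m Qf m hh w) A2 (0\<^sub>m m m) (1\<^sub>m m - t \<cdot>\<^sub>m Dm m hh w) $$ (i,j)
           = (1\<^sub>m m - t \<cdot>\<^sub>m Dm m hh w) $$ (k, l)"
          by (subst index_mat_four_block) (use iF jF i j ik jl in \<open>auto simp: Qf_def Dm_def A2_def\<close>)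
        ultimately show ?thesis using k l by (simp add: Dm_def)
      qed
    qed
  next
    show "dim_row M = dim_row (four_block_mat (1\<^sub>m m - t \<cdot>\<^sub>m Qf m hh w) A2 (0\<^sub>m m m) (1\<^sub>m m - t \<cdot>\<^sub>m Dm m hh w))"
      unfolding M_def by (simp add: Qf_def Dm_def)
    show "dim_col M = dim_col (four_block_mat (1\<^sub>m m - t \<cdot>\<^sub>m Qf m hh w) A2 (0\<^sub>m m m) (1\<^sub>m m - t \<cdot>\<^sub>m Dm m hh w))"
      unfolding M_def by (simp add: Qf_def Dm_def)
  qed
  have "det M = det (1\<^sub>m m - t \<cdot>\<^sub>m Qf m hh w) * det (1\<^sub>m m - t \<cdot>\<^sub>m Dm m hh w)"
    unfolding blocks
    by (rule det_four_block_mat_lower_left_zero) (auto simp: Qf_def Dm_def A2_def)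
  moreover have "det (1\<^sub>m m - t \<cdot>\<^sub>m Dm m hh w) = (\<Prod>s<m. 1 - t * (if s = hh then 0 else w s))"
  proof -
    have ut: "upper_triangular (1\<^sub>m m - t \<cdot>\<^sub>m Dm m hh w)"
    proof (rule upper_triangularI)
      fix i j assume ji: "j < i" and i: "i < dim_row (1\<^sub>m m - t \<cdot>\<^sub>m Dm m hh w)"
      have im: "i < m" using i by (simp add: Dm_def)
      have jm: "j < m" using ji im by simp
      have "(1\<^sub>m m - t \<cdot>\<^sub>m Dm m hh w) $$ (i,j) = 1\<^sub>m m $$ (i,j) - t * Dm m hh w $$ (i,j)"
        using im jm by (simp add: Dm_def)
      also have "\<dots> = 0" using im jm ji by (simp add: Dm_def)
      finally show "(1\<^sub>m m - t \<cdot>\<^sub>m Dm m hh w) $$ (i,j) = 0" .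
    qed
    have Dc: "Dm m hh w \<in> carrier_mat m m" by (simp add: Dm_def)
    have ADc: "1\<^sub>m m - t \<cdot>\<^sub>m Dm m hh w \<in> carrier_mat m m"
      by (intro minus_carrier_mat smult_carrier_mat Dc)
    have "det (1\<^sub>m m - t \<cdot>\<^sub>m Dm m hh w) = prod_list (diag_mat (1\<^sub>m m - t \<cdot>\<^sub>m Dm m hh w))"
      by (rule det_upper_triangular[OF ut ADc])
    also have "\<dots> = prod_list (map (\<lambda>s. 1 - t * (if s = hh then 0 else w s)) [0..<m])"
    proof -
      have dr: "dim_row (1\<^sub>m m - t \<cdot>\<^sub>m Dm m hh w) = m" using Dc by simp
      have de: "(1\<^sub>m m - t \<cdot>\<^sub>m Dm m hh w) $$ (s,s) = 1 - t * (if s = hh then 0 else w s)" if "s < m" for s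
      proof -
        have "(1\<^sub>m m - t \<cdot>\<^sub>m Dm m hh w) $$ (s,s) = 1\<^sub>m m $$ (s,s) - t * Dm m hh w $$ (s,s)"
          using that Dc by simp
        then show ?thesis using that by (simp add: Dm_def)
      qed
      show ?thesis unfolding diag_mat_def dr
        by (intro arg_cong[where f=prod_list] map_cong) (auto simp: de)
    qed
    also have "\<dots> = (\<Prod>s<m. 1 - t * (if s = hh then 0 else w s))"
      by (simp add: prod.distinct_set_conv_list[symmetric] lessThan_atLeast0)
    finally show ?thesis .
  qed
  ultimately show ?thesis using detM unfolding W_def V_def by simp
qed




definition pt :: "(nat \<Rightarrow> real) \<Rightarrow> nat \<Rightarrow> real \<times> bool" where
  "pt a c = (if even c then (a (c div 2 + 1), True) else (a (c div 2 + 2), False))"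

definition iota :: "nat \<Rightarrow> (nat \<Rightarrow> real) \<Rightarrow> (nat \<Rightarrow> real) \<Rightarrow> (nat \<Rightarrow> real) \<Rightarrow> nat \<Rightarrow> nat" where
  "iota n rho vr a k = (THE i. i \<in> {1..n} \<and> ifs rho vr i ` Ival n a = {a k .. a (Suc k)})"

lemma side_in_Icc:
  assumes "l < u"
  shows "side_in {l..u} x True \<longleftrightarrow> l \<le> x \<and> x < u"
    and "side_in {l..u} x False \<longleftrightarrow> l < x \<and> x \<le> u"
proof -
  show "side_in {l..u} x True \<longleftrightarrow> l \<le> x \<and> x < u"
  proof
    assume "side_in {l..u} x True"
    then obtain d where d: "d > 0" "{x..x+d} \<subseteq> {l..u}" unfolding side_in_def by auto
    then have "x \<in> {l..u}" "x + d \<in> {l..u}" by auto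
    then show "l \<le> x \<and> x < u" using d by auto
  next
    assume "l \<le> x \<and> x < u"
    then show "side_in {l..u} x True" unfolding side_in_def
      by (intro exI[of _ "u - x"]) auto
  qed
  show "side_in {l..u} x False \<longleftrightarrow> l < x \<and> x \<le> u"
  proof
    assume "side_in {l..u} x False"
    then obtain d where d: "d > 0" "{x-d..x} \<subseteq> {l..u}" unfolding side_in_def by auto
    then have "x \<in> {l..u}" "x - d \<in> {l..u}" by auto
    then show "l < x \<and> x \<le> u" using d by auto
  next
    assume "l < x \<and> x \<le> u"
    then show "side_in {l..u} x False" unfolding side_in_def
      by (intro exI[of _ "x - l"]) auto
  qed
qed

lemma pt_less_asym: "pt_less p r \<Longrightarrow> \<not> pt_less r p"
  unfolding pt_less_def by auto

lemma inside_bool: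
  fixes p q :: "real \<times> bool" and x :: real
  shows "((if pt_less p q then pt_le p (x, False) \<and> pt_le (x, False) q else pt_le q (x, False) \<and> pt_le (x, False) p)
              \<and> (if pt_less p q then pt_le p (x, True) \<and> pt_le (x, True) q else pt_le q (x, True) \<and> pt_le (x, True) p))
       = ((pt_less p q \<and> \<not> pt_le (x, True) p \<and> pt_le (x, True) q) \<or> (\<not> pt_less p q \<and> \<not> pt_le (x, True) q \<and> pt_le (x, True) p))"
proof -
  obtain p1 ps q1 qs where pq: "p = (p1, ps)" "q = (q1, qs)" by (cases p, cases q)
  show ?thesis unfolding pq pt_le_def pt_less_def by (cases ps; cases qs) auto
qed

lemma pt_mono1: fixes p q y :: "real \<times> bool"
  shows "pt_less p q \<Longrightarrow> pt_le y p \<Longrightarrow> pt_le y q"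
proof -
  obtain p1 ps q1 qs y1 ys where pq: "p = (p1, ps)" "q = (q1, qs)" "y = (y1, ys)" by (cases p, cases q, cases y)
  show "pt_less p q \<Longrightarrow> pt_le y p \<Longrightarrow> pt_le y q" unfolding pq pt_le_def pt_less_def by (cases ps; cases qs; cases ys) auto
qed

lemma pt_mono2: fixes p q y :: "real \<times> bool"
  shows "\<not> pt_less p q \<Longrightarrow> pt_le y q \<Longrightarrow> pt_le y p"
proof -
  obtain p1 ps q1 qs y1 ys where pq: "p = (p1, ps)" "q = (q1, qs)" "y = (y1, ys)" by (cases p, cases q, cases y)
  show "\<not> pt_less p q \<Longrightarrow> pt_le y q \<Longrightarrow> pt_le y p" unfolding pq pt_le_def pt_less_def by (cases ps; cases qs; cases ys) auto
qed

lemma inside_term: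
  fixes p q :: "real \<times> bool" and x v \<sigma> :: real
  shows "(if T \<and> (if pt_less p q then pt_le p (x, False) \<and> pt_le (x, False) q else pt_le q (x, False) \<and> pt_le (x, False) p)
              \<and> (if pt_less p q then pt_le p (x, True) \<and> pt_le (x, True) q else pt_le q (x, True) \<and> pt_le (x, True) p)
          then \<sigma> * (if pt_less p q then v else - v) else 0)
       = (if T then \<sigma> * v * ((if pt_le (x, True) q then 1 else 0) - (if pt_le (x, True) p then 1 else 0)) else 0)"
proof -
  have m1: "pt_less p q \<Longrightarrow> pt_le (x, True) p \<Longrightarrow> pt_le (x, True) q" by (rule pt_mono1)
  have m2: "\<not> pt_less p q \<Longrightarrow> pt_le (x, True) q \<Longrightarrow> pt_le (x, True) p" by (rule pt_mono2)
  show ?thesis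
    unfolding conj_assoc[symmetric] unfolding conj_assoc inside_bool[of p q x]
    using m1 m2 by (cases T; cases "pt_less p q"; cases "pt_le (x, True) p"; cases "pt_le (x, True) q") auto
qed

locale ctx =
  fixes n h :: nat and rho vr a :: "nat \<Rightarrow> real" and \<beta> :: real
  assumes n_pos: "1 \<le> n"
    and contr: "\<forall>i\<in>{1..n}. 0 < \<bar>rho i\<bar> \<and> \<bar>rho i\<bar> < 1"
    and a_mono: "\<forall>k\<in>{1..n+1}. a k < a (k+1)"
    and h_range: "h \<in> {1..n+1}"
    and tiling: "bij_betw (\<lambda>i. ifs rho vr i ` Ival n a) {1..n}
                   ((\<lambda>k. {a k .. a (k+1)}) ` ({1..n+1} - {h}))"
begin

abbreviation "lap i \<equiv> ifs rho vr i ` Ival n a"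
abbreviation "io \<equiv> iota n rho vr a"

lemma a_less_aux: "i \<ge> 1 \<Longrightarrow> i + Suc d \<le> n + 2 \<Longrightarrow> a i < a (i + Suc d)"
proof (induction d)
  case 0 then show ?case using a_mono by auto
next
  case (Suc d)
  then have "a i < a (i + Suc d)" by simp
  also have "a (i + Suc d) < a (i + Suc d + 1)" using a_mono Suc.prems by auto
  finally show ?case by simp
qed

lemma a_less: "i \<in> {1..n+2} \<Longrightarrow> j \<in> {1..n+2} \<Longrightarrow> i < j \<Longrightarrow> a i < a j"
  using a_less_aux[of i "j - i - 1"] by auto

lemma a_less_iff: "i \<in> {1..n+2} \<Longrightarrow> j \<in> {1..n+2} \<Longrightarrow> a i < a j \<longleftrightarrow> i < j"
  using a_less[of i j] a_less[of j i] by (cases "i < j"; cases "j < i") auto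

lemma a_le_iff: "i \<in> {1..n+2} \<Longrightarrow> j \<in> {1..n+2} \<Longrightarrow> a i \<le> a j \<longleftrightarrow> i \<le> j"
  using a_less_iff[of j i] by auto

lemma a_eq_iff: "i \<in> {1..n+2} \<Longrightarrow> j \<in> {1..n+2} \<Longrightarrow> a i = a j \<longleftrightarrow> i = j"
  using a_less_iff[of i j] a_less_iff[of j i] by (cases "i < j"; cases "j < i") auto

lemma rho_nz: "i \<in> {1..n} \<Longrightarrow> rho i \<noteq> 0"
  using contr by auto

lemma lap_form: "lap i = (if 0 \<le> rho i then {rho i * a 1 + vr i .. rho i * a (n+2) + vr i}
                           else {rho i * a (n+2) + vr i .. rho i * a 1 + vr i})"
proof -
  have ne: "{a 1 .. a (n+2)} \<noteq> {}" using a_less[of 1 "n+2"] by auto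
  have "lap i = (\<lambda>x. rho i * x + vr i) ` {a 1 .. a (n+2)}"
    unfolding Ival_def ifs_def by simp
  then show ?thesis using ne by (simp only: image_affinity_atLeastAtMost) simp
qed

lemma Icc_inj: "k \<in> {1..n+1} \<Longrightarrow> k' \<in> {1..n+1} \<Longrightarrow> {a k .. a (Suc k)} = {a k' .. a (Suc k')} \<Longrightarrow> k = k'"
proof -
  assume k: "k \<in> {1..n+1}" and k': "k' \<in> {1..n+1}" and e: "{a k .. a (Suc k)} = {a k' .. a (Suc k')}"
  have "a k < a (Suc k)" "a k' < a (Suc k')" using a_mono k k' by auto
  then have "a k = a k'" using e by (simp add: Icc_eq_Icc)
  then show "k = k'" using a_eq_iff[of k k'] k k' by auto
qed

lemma surj_eq: "(\<lambda>i. lap i) ` {1..n} = (\<lambda>k. {a k .. a (k+1)}) ` ({1..n+1} - {h})"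
  using bij_betw_imp_surj_on[OF tiling] .

lemma lap_seg: assumes i: "i \<in> {1..n}" shows "\<exists>k\<in>{1..n+1} - {h}. lap i = {a k .. a (Suc k)}"
proof -
  have "lap i \<in> (\<lambda>i. lap i) ` {1..n}" using i by (rule imageI)
  then have "lap i \<in> (\<lambda>k. {a k .. a (k+1)}) ` ({1..n+1} - {h})" by (simp only: surj_eq)
  then obtain k where "k \<in> {1..n+1} - {h}" "lap i = {a k .. a (k+1)}" by (rule imageE)
  then show ?thesis by (intro bexI[of _ k]) simp_all
qed

lemma io_ex1: "k \<in> {1..n+1} - {h} \<Longrightarrow> \<exists>!i. i \<in> {1..n} \<and> lap i = {a k .. a (Suc k)}"
proof -
  assume k: "k \<in> {1..n+1} - {h}"
  have "{a k .. a (k+1)} \<in> (\<lambda>k. {a k .. a (k+1)}) ` ({1..n+1} - {h})" using k by (rule imageI)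
  then have "{a k .. a (k+1)} \<in> (\<lambda>i. lap i) ` {1..n}" by (simp only: surj_eq)
  then obtain i where i1: "i \<in> {1..n}" and i2': "{a k .. a (k+1)} = lap i" by (rule imageE)
  have i2: "lap i = {a k .. a (Suc k)}" unfolding Suc_eq_plus1 using i2' by (rule sym)
  have uniq: "j = i" if "j \<in> {1..n}" "lap j = {a k .. a (Suc k)}" for j
  proof -
    have "lap j = lap i" using that(2) i2 by (simp only:)
    then show "j = i" by (rule inj_onD[OF bij_betw_imp_inj_on[OF tiling] _ that(1) i1])
  qed
  show ?thesis
  proof (rule ex1I[of _ i])
    show "i \<in> {1..n} \<and> lap i = {a k .. a (Suc k)}" using i1 i2 by (rule conjI)
  next
    fix j assume "j \<in> {1..n} \<and> lap j = {a k .. a (Suc k)}"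
    then show "j = i" by (elim conjE) (rule uniq)
  qed
qed

lemma io_props: assumes "k \<in> {1..n+1} - {h}"
  shows "io k \<in> {1..n}" "lap (io k) = {a k .. a (Suc k)}"
proof -
  have "io k \<in> {1..n} \<and> lap (io k) = {a k .. a (Suc k)}"
    unfolding iota_def by (rule theI'[OF io_ex1[OF assms]])
  then show "io k \<in> {1..n}" "lap (io k) = {a k .. a (Suc k)}" by auto
qed

lemma io_unique: assumes k: "k \<in> {1..n+1} - {h}" and i: "i \<in> {1..n}" and L: "lap i = {a k .. a (Suc k)}"
  shows "io k = i"
proof -
  have "io k = (THE i. i \<in> {1..n} \<and> lap i = {a k .. a (Suc k)})" by (simp only: iota_def)
  also have "\<dots> = i" by (rule the1_equality[OF io_ex1[OF k]]) (use i L in blast)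
  finally show ?thesis .
qed

lemma io_ends:
  assumes k: "k \<in> {1..n+1} - {h}"
  shows "0 < rho (io k) \<Longrightarrow> (a k - vr (io k)) / rho (io k) = a 1 \<and> (a (Suc k) - vr (io k)) / rho (io k) = a (n+2)"
    and "rho (io k) < 0 \<Longrightarrow> (a k - vr (io k)) / rho (io k) = a (n+2) \<and> (a (Suc k) - vr (io k)) / rho (io k) = a 1"
proof -
  let ?i = "io k"
  have i: "?i \<in> {1..n}" and L: "lap ?i = {a k .. a (Suc k)}" using io_props[OF k] by auto
  have ak: "a k < a (Suc k)" using a_mono k by auto
  show "0 < rho ?i \<Longrightarrow> (a k - vr ?i) / rho ?i = a 1 \<and> (a (Suc k) - vr ?i) / rho ?i = a (n+2)"
  proof -
    assume pos: "0 < rho ?i"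
    have LF: "lap ?i = {rho ?i * a 1 + vr ?i .. rho ?i * a (n+2) + vr ?i}"
      unfolding lap_form[of ?i] using pos by simp
    have "{rho ?i * a 1 + vr ?i .. rho ?i * a (n+2) + vr ?i} = {a k .. a (Suc k)}"
      by (metis LF L)
    then have e1: "rho ?i * a 1 + vr ?i = a k" and e2: "rho ?i * a (n+2) + vr ?i = a (Suc k)"
      using ak by (simp_all add: Icc_eq_Icc)
    have "a k - vr ?i = rho ?i * a 1" "a (Suc k) - vr ?i = rho ?i * a (n+2)" using e1 e2 by linarith+
    then show ?thesis using pos by simp
  qed
  show "rho ?i < 0 \<Longrightarrow> (a k - vr ?i) / rho ?i = a (n+2) \<and> (a (Suc k) - vr ?i) / rho ?i = a 1"
  proof -
    assume neg: "rho ?i < 0"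
    have LF: "lap ?i = {rho ?i * a (n+2) + vr ?i .. rho ?i * a 1 + vr ?i}"
      unfolding lap_form[of ?i] using neg by simp
    have "{rho ?i * a (n+2) + vr ?i .. rho ?i * a 1 + vr ?i} = {a k .. a (Suc k)}"
      by (metis LF L)
    then have e1: "rho ?i * a (n+2) + vr ?i = a k" and e2: "rho ?i * a 1 + vr ?i = a (Suc k)"
      using ak by (simp_all add: Icc_eq_Icc)
    have "a k - vr ?i = rho ?i * a (n+2)" "a (Suc k) - vr ?i = rho ?i * a 1" using e1 e2 by linarith+
    then show ?thesis using neg by simp
  qed
qed

end



context ctx begin

lemma pt_fst: "fst (pt a c) = a ((c+1) div 2 + 1)"
  by (cases "even c") (auto simp: pt_def elim!: evenE oddE)

lemma pt_snd: "snd (pt a c) = even c"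
  by (simp add: pt_def)

lemma pt_mono: assumes ij: "i < j" and j: "j < 2*n+2" shows "pt_less (pt a i) (pt a j)"
proof -
  have le: "(i+1) div 2 \<le> (j+1) div 2" using ij by (simp add: div_le_mono)
  have r1: "(i+1) div 2 + 1 \<in> {1..n+2}" "(j+1) div 2 + 1 \<in> {1..n+2}" using ij j by auto
  show ?thesis
  proof (cases "(i+1) div 2 < (j+1) div 2")
    case True
    then have "a ((i+1) div 2 + 1) < a ((j+1) div 2 + 1)" using a_less r1 by auto
    then show ?thesis unfolding pt_less_def pt_fst by simp
  next
    case False
    then have eq: "(i+1) div 2 = (j+1) div 2" using le by simp
    then have "odd i" "even j" using ij by presburger+
    then show ?thesis unfolding pt_less_def pt_fst pt_snd using eq by simp
  qed
qed

lemma pt_less_iff: "i < 2*n+2 \<Longrightarrow> j < 2*n+2 \<Longrightarrow> pt_less (pt a i) (pt a j) \<longleftrightarrow> i < j"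
proof -
  assume i: "i < 2*n+2" and j: "j < 2*n+2"
  have irr: "\<not> pt_less p p" for p :: "real \<times> bool" unfolding pt_less_def by auto
  show ?thesis
  proof (cases "i < j")
    case True then show ?thesis using pt_mono j by auto
  next
    case False
    have "\<not> pt_less (pt a i) (pt a j)"
    proof (cases "j < i")
      case True
      show ?thesis by (rule pt_less_asym[OF pt_mono[OF True i]])
    next
      case F2: False
      then have "j = i" using False by simp
      then show ?thesis using irr by simp
    qed
    then show ?thesis using False by simp
  qed
qed

lemma pt_inj: "i < 2*n+2 \<Longrightarrow> j < 2*n+2 \<Longrightarrow> pt a i = pt a j \<longleftrightarrow> i = j"
proof -
  assume i: "i < 2*n+2" and j: "j < 2*n+2"
  have irr: "\<not> pt_less p p" for p :: "real \<times> bool" unfolding pt_less_def by auto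
  show ?thesis
  proof
    assume e: "pt a i = pt a j"
    show "i = j"
    proof (rule ccontr)
      assume "i \<noteq> j"
      then have "i < j \<or> j < i" by auto
      then show False using pt_mono[of i j] pt_mono[of j i] i j e irr by auto
    qed
  qed simp
qed

lemma pt_le_iff: "i < 2*n+2 \<Longrightarrow> j < 2*n+2 \<Longrightarrow> pt_le (pt a i) (pt a j) \<longleftrightarrow> i \<le> j"
  unfolding pt_le_def using pt_inj pt_less_iff by auto

lemma side_pt:
  assumes i: "i \<in> {1..n}" and c: "c < 2*n+2"
  shows "side_in (lap i) (fst (pt a c)) (snd (pt a c)) \<longleftrightarrow> (c div 2 + 1 \<noteq> h \<and> io (c div 2 + 1) = i)"
proof -
  obtain k where k: "k \<in> {1..n+1} - {h}" and L: "lap i = {a k .. a (Suc k)}" using lap_seg[OF i] by blast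
  have iok: "io k = i" by (rule io_unique[OF k i L])
  have ak: "a k < a (Suc k)" using a_mono k by auto
  define s where "s = c div 2"
  have s: "s \<le> n" using c s_def by auto
  have rk: "k \<in> {1..n+2}" "Suc k \<in> {1..n+2}" using k by auto
  have rs: "s+1 \<in> {1..n+2}" "s+2 \<in> {1..n+2}" using s by auto
  have side: "side_in {a k .. a (Suc k)} (fst (pt a c)) (snd (pt a c)) \<longleftrightarrow> k = s + 1"
  proof (cases "even c")
    case True
    then have "pt a c = (a (s+1), True)" unfolding pt_def s_def by simp
    then have "side_in {a k .. a (Suc k)} (fst (pt a c)) (snd (pt a c)) \<longleftrightarrow> a k \<le> a (s+1) \<and> a (s+1) < a (Suc k)"
      using side_in_Icc(1)[OF ak] by simp
    also have "\<dots> \<longleftrightarrow> k \<le> s+1 \<and> s+1 < Suc k" using a_le_iff[OF rk(1) rs(1)] a_less_iff[OF rs(1) rk(2)] by simp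
    finally show ?thesis by auto
  next
    case False
    then have "pt a c = (a (s+2), False)" unfolding pt_def s_def by simp
    then have "side_in {a k .. a (Suc k)} (fst (pt a c)) (snd (pt a c)) \<longleftrightarrow> a k < a (s+2) \<and> a (s+2) \<le> a (Suc k)"
      using side_in_Icc(2)[OF ak] by simp
    also have "\<dots> \<longleftrightarrow> k < s+2 \<and> s+2 \<le> Suc k" using a_less_iff[OF rk(1) rs(2)] a_le_iff[OF rs(2) rk(2)] by simp
    finally show ?thesis by auto
  qed
  have rhs: "(s + 1 \<noteq> h \<and> io (s + 1) = i) \<longleftrightarrow> k = s + 1"
  proof
    assume H: "s + 1 \<noteq> h \<and> io (s + 1) = i"
    have s1: "s + 1 \<in> {1..n+1} - {h}" using H s by auto
    have "lap i = {a (s+1) .. a (Suc (s+1))}" using io_props(2)[OF s1] H by simp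
    then have "{a k .. a (Suc k)} = {a (s+1) .. a (Suc (s+1))}" unfolding L .
    then show "k = s + 1" using Icc_inj k s1 by blast
  next
    assume "k = s + 1"
    then show "s + 1 \<noteq> h \<and> io (s + 1) = i" using k iok by auto
  qed
  show ?thesis using rhs unfolding L side s_def[symmetric] by simp
qed

lemma has_lap_pt: assumes c: "c < 2*n+2"
  shows "has_lap n rho vr a (pt a c) \<longleftrightarrow> c div 2 + 1 \<noteq> h"
proof
  assume "has_lap n rho vr a (pt a c)"
  then obtain i where "i \<in> {1..n}" "side_in (lap i) (fst (pt a c)) (snd (pt a c))"
    unfolding has_lap_def by blast
  then show "c div 2 + 1 \<noteq> h" using side_pt c by blast
next
  assume H: "c div 2 + 1 \<noteq> h"
  have k: "c div 2 + 1 \<in> {1..n+1} - {h}" using H c by auto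
  have "io (c div 2 + 1) \<in> {1..n}" using io_props(1)[OF k] .
  moreover have "side_in (lap (io (c div 2 + 1))) (fst (pt a c)) (snd (pt a c))"
    using side_pt[OF io_props(1)[OF k] c] H by simp
  ultimately show "has_lap n rho vr a (pt a c)" unfolding has_lap_def by blast
qed

lemma lap_of_pt: assumes c: "c < 2*n+2" and H: "c div 2 + 1 \<noteq> h"
  shows "lap_of n rho vr a (pt a c) = io (c div 2 + 1)"
proof -
  have k: "c div 2 + 1 \<in> {1..n+1} - {h}" using H c by auto
  show ?thesis unfolding lap_of_def
  proof (rule the_equality)
    show "io (c div 2 + 1) \<in> {1..n} \<and> side_in (lap (io (c div 2 + 1))) (fst (pt a c)) (snd (pt a c))"
      using side_pt[OF io_props(1)[OF k] c] H io_props(1)[OF k] by simp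
  next
    fix i assume "i \<in> {1..n} \<and> side_in (lap i) (fst (pt a c)) (snd (pt a c))"
    then show "i = io (c div 2 + 1)" using side_pt[of i c] c by auto
  qed
qed

definition qidx :: "nat \<Rightarrow> nat" where
  "qidx c = (if (even c \<longleftrightarrow> 0 < rho (io (c div 2 + 1))) then 0 else 2*n+1)"

lemma Fpt_pt: assumes c: "c < 2*n+2"
  shows "Fpt n rho vr a (pt a c) = (if c div 2 + 1 = h then None else Some (pt a (qidx c)))"
proof (cases "c div 2 + 1 = h")
  case True
  then show ?thesis unfolding Fpt_def using has_lap_pt[OF c] by simp
next
  case False
  define k where "k = c div 2 + 1"
  have k: "k \<in> {1..n+1} - {h}" using False c k_def by auto
  have nz: "rho (io k) \<noteq> 0" using rho_nz io_props(1)[OF k] by blast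
  have p0: "pt a 0 = (a 1, True)" by (simp add: pt_def)
  have pN: "pt a (2*n+1) = (a (n+2), False)" by (simp add: pt_def)
  have F: "Fpt n rho vr a (pt a c) = Some ((fst (pt a c) - vr (io k)) / rho (io k),
              if 0 < rho (io k) then snd (pt a c) else \<not> snd (pt a c))"
    unfolding Fpt_def using has_lap_pt[OF c] lap_of_pt[OF c False] False k_def by (simp add: Let_def)
  have "(fst (pt a c) - vr (io k)) / rho (io k) = fst (pt a (qidx c)) \<and>
        (if 0 < rho (io k) then snd (pt a c) else \<not> snd (pt a c)) = snd (pt a (qidx c))"
  proof (cases "even c")
    case True
    have pc: "pt a c = (a k, True)" unfolding pt_def k_def using True by simp
    show ?thesis
    proof (cases "0 < rho (io k)")
      case True
      then show ?thesis using io_ends(1)[OF k] pc \<open>even c\<close> p0 unfolding qidx_def k_def by simp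
    next
      case False
      then have neg: "rho (io k) < 0" using nz by simp
      then show ?thesis using io_ends(2)[OF k] pc \<open>even c\<close> pN False unfolding qidx_def k_def by simp
    qed
  next
    case False
    have pc: "pt a c = (a (Suc k), False)" unfolding pt_def k_def using False by simp
    show ?thesis
    proof (cases "0 < rho (io k)")
      case True
      then show ?thesis using io_ends(1)[OF k] pc \<open>odd c\<close> pN unfolding qidx_def k_def by simp
    next
      case F2: False
      then have neg: "rho (io k) < 0" using nz by simp
      then show ?thesis using io_ends(2)[OF k] pc \<open>odd c\<close> p0 F2 unfolding qidx_def k_def by simp
    qed
  qed
  then show ?thesis unfolding F using False by (simp add: prod_eq_iff)
qed

end



lemma V_entry_Some:
  assumes F: "Fpt n rho vr a p = Some q0"
  shows "V_entry n rho vr a \<beta> r p =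
    (let q = canon n a q0; d = Fderiv_pt n rho vr a p; v = sgn d * \<bar>d\<bar> powr (- \<beta>)
     in (if r = q then v else 0) +
        (if fst r \<in> turning n a then (if snd r then -1 else 1) * v *
            ((if pt_le (fst r, True) q then 1 else 0) - (if pt_le (fst r, True) p then 1 else 0)) else 0))"
  unfolding V_entry_def Let_def F option.case inside_term by (rule refl)

context ctx begin

lemma canon_pt: "c < 2*n+2 \<Longrightarrow> canon n a (pt a c) = pt a c"
  unfolding canon_def pt_fst by auto

lemma qidx_lt: "qidx c < 2*n+2"
  unfolding qidx_def by auto

lemma init_eq: "init_pts n a = pt a ` {..<2*n+2}"
proof
  show "init_pts n a \<subseteq> pt a ` {..<2*n+2}"
  proof
    fix p assume "p \<in> init_pts n a"
    then consider k where "k \<in> {1..n+1}" "p = (a k, True)" | k where "k \<in> {2..n+2}" "p = (a k, False)"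
      unfolding init_pts_def by blast
    then show "p \<in> pt a ` {..<2*n+2}"
    proof cases
      case 1
      then have "p = pt a (2*(k-1))" unfolding pt_def by auto
      moreover have "2*(k-1) < 2*n+2" using 1 by auto
      ultimately show ?thesis by blast
    next
      case 2
      then obtain j where j: "k = j + 2" by (metis le_add_diff_inverse2 atLeastAtMost_iff)
      have "p = pt a (2*j+1)" unfolding pt_def using 2 j by simp
      moreover have "2*j+1 < 2*n+2" using 2 j by auto
      ultimately show ?thesis by blast
    qed
  qed
  show "pt a ` {..<2*n+2} \<subseteq> init_pts n a"
  proof
    fix p assume "p \<in> pt a ` {..<2*n+2}"
    then obtain c where c: "c < 2*n+2" "p = pt a c" by auto
    show "p \<in> init_pts n a"
    proof (cases "even c")
      case True
      then have "p = (a (c div 2 + 1), True)" "c div 2 + 1 \<in> {1..n+1}" using c unfolding pt_def by auto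
      then show ?thesis unfolding init_pts_def by blast
    next
      case False
      then have "p = (a (c div 2 + 2), False)" "c div 2 + 2 \<in> {2..n+2}" using c unfolding pt_def by auto
      then show ?thesis unfolding init_pts_def by blast
    qed
  qed
qed

lemma orbit_sub: assumes p0: "p0 \<in> pt a ` {..<2*n+2}"
  shows "orbit n rho vr a p0 \<subseteq> pt a ` {..<2*n+2}"
proof
  fix p assume "p \<in> orbit n rho vr a p0"
  then have "(p0, p) \<in> (step_rel n rho vr a)\<^sup>*" unfolding orbit_def by simp
  then show "p \<in> pt a ` {..<2*n+2}"
  proof (induction rule: rtrancl_induct)
    case base then show ?case using p0 .
  next
    case (step y z)
    obtain c where c: "c < 2*n+2" "y = pt a c" using step.IH by auto
    obtain q where q: "Fpt n rho vr a y = Some q" "z = canon n a q"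
      using step.hyps(2) unfolding step_rel_def by blast
    have "q = pt a (qidx c)" using q(1) Fpt_pt[OF c(1)] c(2) by (auto split: if_splits)
    then have "z = pt a (qidx c)" using q(2) canon_pt[OF qidx_lt] by simp
    then show ?case using qidx_lt by blast
  qed
qed

lemma Y_eq: "Ypts n rho vr a = pt a ` {..<2*n+2}"
proof
  show "Ypts n rho vr a \<subseteq> pt a ` {..<2*n+2}"
    unfolding Ypts_def using orbit_sub init_eq by blast
  show "pt a ` {..<2*n+2} \<subseteq> Ypts n rho vr a"
  proof
    fix p assume p: "p \<in> pt a ` {..<2*n+2}"
    have "p \<in> orbit n rho vr a p" unfolding orbit_def by simp
    then show "p \<in> Ypts n rho vr a" unfolding Ypts_def using p init_eq by blast
  qed
qed

lemma pt_inj_on: "inj_on (pt a) {..<2*n+2}"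
  by (rule inj_onI) (use pt_inj in auto)

lemma card_Y: "card (Ypts n rho vr a) = 2*n+2"
  unfolding Y_eq card_image[OF pt_inj_on] by simp

lemma less_set: "j < 2*n+2 \<Longrightarrow> {r \<in> pt a ` {..<2*n+2}. pt_less r (pt a j)} = pt a ` {..<j}"
  using pt_less_iff by auto

lemma card_less_set: "j < 2*n+2 \<Longrightarrow> card {r \<in> pt a ` {..<2*n+2}. pt_less r (pt a j)} = j"
proof -
  assume j: "j < 2*n+2"
  have "inj_on (pt a) {..<j}" using inj_on_subset[OF pt_inj_on] j by auto
  then show ?thesis unfolding less_set[OF j] by (simp add: card_image)
qed

lemma nth_pt_eq: assumes k: "k < 2*n+2" shows "nth_pt (Ypts n rho vr a) k = pt a k"
  unfolding nth_pt_def Y_eq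
proof (rule the_equality)
  show "pt a k \<in> pt a ` {..<2*n+2} \<and> card {r \<in> pt a ` {..<2*n+2}. pt_less r (pt a k)} = k"
    using k card_less_set[OF k] by auto
next
  fix p assume H: "p \<in> pt a ` {..<2*n+2} \<and> card {r \<in> pt a ` {..<2*n+2}. pt_less r p} = k"
  then obtain j where j: "j < 2*n+2" "p = pt a j" by auto
  then have "j = k" using H card_less_set[OF j(1)] by simp
  then show "p = pt a k" using j by simp
qed

definition wv :: "nat \<Rightarrow> real" where
  "wv s = (let d = 1 / rho (io (s+1)) in sgn d * \<bar>d\<bar> powr (- \<beta>))"

definition eps :: "nat \<Rightarrow> bool" where
  "eps s = (0 < rho (io (s+1)))"

lemma turn_pt: "r < 2*n+2 \<Longrightarrow> fst (pt a r) \<in> turning n a \<longleftrightarrow> 1 \<le> r \<and> r \<le> 2*n"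
proof -
  assume r: "r < 2*n+2"
  have rr: "(r+1) div 2 + 1 \<in> {1..n+2}" using r by auto
  have "fst (pt a r) \<in> turning n a \<longleftrightarrow> (\<exists>j\<in>{2..n+1}. a ((r+1) div 2 + 1) = a j)"
    unfolding turning_def pt_fst by auto
  also have "\<dots> \<longleftrightarrow> (\<exists>j\<in>{2..n+1}. (r+1) div 2 + 1 = j)"
    using a_eq_iff rr by auto
  also have "\<dots> \<longleftrightarrow> 1 \<le> r \<and> r \<le> 2*n" by auto
  finally show ?thesis .
qed

lemma gam_pt: "r < 2*n+2 \<Longrightarrow> 1 \<le> r \<Longrightarrow> r \<le> 2*n \<Longrightarrow>
   (fst (pt a r), True) = pt a (if even r then r else r + 1)"
  unfolding pt_def by (auto elim!: oddE)

lemma V_pt: assumes r: "r < 2*n+2" and c: "c < 2*n+2"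
  shows "V_entry n rho vr a \<beta> (pt a r) (pt a c) = Vf (n+1) (h-1) wv eps r c"
proof (cases "c div 2 + 1 = h")
  case True
  then have "c div 2 = h - 1" by simp
  then show ?thesis unfolding V_entry_def Vf_def using Fpt_pt[OF c] True by simp
next
  case False
  have hc: "c div 2 \<noteq> h - 1" using False h_range by auto
  let ?q = "qidx c"
  define v where "v = wv (c div 2)"
  have Fd: "Fderiv_pt n rho vr a (pt a c) = 1 / rho (io (c div 2 + 1))"
    unfolding Fderiv_pt_def lap_of_pt[OF c False] ..
  have vv: "sgn (Fderiv_pt n rho vr a (pt a c)) * \<bar>Fderiv_pt n rho vr a (pt a c)\<bar> powr (- \<beta>) = v"
    unfolding Fd v_def wv_def Let_def ..
  define G where "G z = (if pt_le (fst (pt a r), True) z then 1 else (0::real))" for z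
  have E: "V_entry n rho vr a \<beta> (pt a r) (pt a c) =
      (if pt a r = pt a ?q then v else 0) +
      (if fst (pt a r) \<in> turning n a then (if snd (pt a r) then -1 else 1) * v * (G (pt a ?q) - G (pt a c)) else 0)"
    unfolding V_entry_Some[OF Fpt_pt[OF c, unfolded if_not_P[OF False]]] canon_pt[OF qidx_lt] Let_def vv G_def ..
  have q: "qcf (n+1) eps c = ?q" unfolding qcf_def qidx_def eps_def by simp
  define \<gamma> where "\<gamma> = (if even r then r else r + 1)"
  have Vf_e: "Vf (n+1) (h-1) wv eps r c = v * ((if r = ?q then 1 else 0) +
      (if 1 \<le> r \<and> r \<le> 2*n then (if even r then -1 else 1) else 0) *
        ((if \<gamma> \<le> ?q then 1 else 0) - (if \<gamma> \<le> c then 1 else 0)))"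
    unfolding Vf_def Let_def v_def \<gamma>_def q[symmetric] using hc by (simp add: qcf_def)
  show ?thesis
  proof (cases "1 \<le> r \<and> r \<le> 2*n")
    case True
    have T: "fst (pt a r) \<in> turning n a" using turn_pt[OF r] True by simp
    have gl: "\<gamma> < 2*n+2" using True \<gamma>_def by auto
    have Gz: "G (pt a z) = (if \<gamma> \<le> z then 1 else 0)" if "z < 2*n+2" for z
      unfolding G_def gam_pt[OF r True[THEN conjunct1] True[THEN conjunct2]] \<gamma>_def[symmetric]
      using pt_le_iff[OF gl that] by simp
    show ?thesis unfolding E Vf_e using T True Gz[OF qidx_lt] Gz[OF c] pt_inj[OF r qidx_lt] pt_snd
      by (simp add: algebra_simps)
  next
    case False
    have T: "fst (pt a r) \<notin> turning n a" using turn_pt[OF r] False by simp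
    have z: "(if 1 \<le> r \<and> r \<le> 2*n then (if even r then -1 else 1) else (0::real)) = 0" using False by simp
    have pq: "(pt a r = pt a ?q) = (r = ?q)" using pt_inj[OF r qidx_lt] .
    show ?thesis unfolding E Vf_e z pq using T by simp
  qed
qed

end



context ctx begin

lemma Vmat_eq: "Vmat n rho vr a \<beta> = mat (2*(n+1)) (2*(n+1)) (\<lambda>(r,c). Vf (n+1) (h-1) wv eps r c)"
proof -
  have cY: "card (Ypts n rho vr a) = 2*(n+1)" using card_Y by simp
  show ?thesis
    unfolding Vmat_def Let_def cY
  proof (rule eq_matI)
    fix i j assume i: "i < dim_row (mat (2*(n+1)) (2*(n+1)) (\<lambda>(r,c). Vf (n+1) (h-1) wv eps r c))"
      and j: "j < dim_col (mat (2*(n+1)) (2*(n+1)) (\<lambda>(r,c). Vf (n+1) (h-1) wv eps r c))"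
    have i': "i < 2*n+2" and j': "j < 2*n+2" using i j by auto
    show "mat (2*(n+1)) (2*(n+1)) (\<lambda>(i,j). V_entry n rho vr a \<beta> (nth_pt (Ypts n rho vr a) i) (nth_pt (Ypts n rho vr a) j)) $$ (i,j)
        = mat (2*(n+1)) (2*(n+1)) (\<lambda>(r,c). Vf (n+1) (h-1) wv eps r c) $$ (i,j)"
      using i j by (simp add: nth_pt_eq[OF i'] nth_pt_eq[OF j'] V_pt[OF i' j'])
  qed auto
qed

lemma a_inj_on: "inj_on a {1..n+2}"
  by (rule inj_onI) (use a_eq_iff in blast)

lemma P_eq: "part_pts n rho vr a = a ` {1..n+2}"
proof -
  have "fst ` Ypts n rho vr a \<subseteq> a ` {1..n+2}"
  proof
    fix x assume "x \<in> fst ` Ypts n rho vr a"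
    then obtain c where c: "c < 2*n+2" "x = fst (pt a c)" unfolding Y_eq by auto
    then have "x = a ((c+1) div 2 + 1)" "(c+1) div 2 + 1 \<in> {1..n+2}" unfolding pt_fst by auto
    then show "x \<in> a ` {1..n+2}" by blast
  qed
  then show ?thesis unfolding part_pts_def by blast
qed

lemma card_P: "card (part_pts n rho vr a) = n + 2"
  unfolding P_eq card_image[OF a_inj_on] by simp

lemma nth_real_eq: assumes k: "k < n + 2" shows "nth_real (part_pts n rho vr a) k = a (k+1)"
proof -
  have ls: "{y \<in> a ` {1..n+2}. y < a (j+1)} = a ` {1..j}" if j: "j < n+2" for j
  proof
    show "{y \<in> a ` {1..n+2}. y < a (j+1)} \<subseteq> a ` {1..j}"
    proof
      fix y assume "y \<in> {y \<in> a ` {1..n+2}. y < a (j+1)}"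
      then obtain l where l: "l \<in> {1..n+2}" "y = a l" "a l < a (j+1)" by auto
      then have "l < j + 1" using a_less_iff[of l "j+1"] j by auto
      then show "y \<in> a ` {1..j}" using l by auto
    qed
    show "a ` {1..j} \<subseteq> {y \<in> a ` {1..n+2}. y < a (j+1)}"
    proof
      fix y assume "y \<in> a ` {1..j}"
      then obtain l where l: "l \<in> {1..j}" "y = a l" by auto
      then have "a l < a (j+1)" using a_less[of l "j+1"] j by auto
      then show "y \<in> {y \<in> a ` {1..n+2}. y < a (j+1)}" using l j by auto
    qed
  qed
  have cl: "card {y \<in> a ` {1..n+2}. y < a (j+1)} = j" if j: "j < n+2" for j
  proof -
    have "inj_on a {1..j}" using inj_on_subset[OF a_inj_on] j by auto
    then show ?thesis unfolding ls[OF j] by (simp add: card_image)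
  qed
  show ?thesis unfolding nth_real_def P_eq
  proof (rule the_equality)
    show "a (k+1) \<in> a ` {1..n+2} \<and> card {y \<in> a ` {1..n+2}. y < a (k+1)} = k"
      using k cl[OF k] by auto
  next
    fix x assume H: "x \<in> a ` {1..n+2} \<and> card {y \<in> a ` {1..n+2}. y < x} = k"
    then obtain l where l: "l \<in> {1..n+2}" "x = a l" by auto
    define j where "j = l - 1"
    have j: "j < n+2" "l = j + 1" using l j_def by auto
    have "j = k" using H cl[OF j(1)] l j by simp
    then show "x = a (k+1)" using l j by simp
  qed
qed

end



context ctx begin

lemma io_lin: assumes k: "k \<in> {1..n+1} - {h}"
  shows "0 < rho (io k) \<Longrightarrow> a k = rho (io k) * a 1 + vr (io k) \<and> a (Suc k) = rho (io k) * a (n+2) + vr (io k)"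
    and "rho (io k) < 0 \<Longrightarrow> a k = rho (io k) * a (n+2) + vr (io k) \<and> a (Suc k) = rho (io k) * a 1 + vr (io k)"
proof -
  have nz: "rho (io k) \<noteq> 0" using rho_nz io_props(1)[OF k] by blast
  show "0 < rho (io k) \<Longrightarrow> a k = rho (io k) * a 1 + vr (io k) \<and> a (Suc k) = rho (io k) * a (n+2) + vr (io k)"
    using io_ends(1)[OF k] nz by (auto simp: divide_eq_eq algebra_simps)
  show "rho (io k) < 0 \<Longrightarrow> a k = rho (io k) * a (n+2) + vr (io k) \<and> a (Suc k) = rho (io k) * a 1 + vr (io k)"
    using io_ends(2)[OF k] nz by (auto simp: divide_eq_eq algebra_simps)
qed

lemma F_img_hole: "F_img n rho vr a {a h <..< a (h+1)} = {}"
proof -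
  have "False" if x1: "x \<in> {a h <..< a (h+1)}" and i: "i \<in> {1..n}" and x2: "x \<in> interior (lap i)" for x i
  proof -
    obtain k where k: "k \<in> {1..n+1} - {h}" and L: "lap i = {a k .. a (Suc k)}" using lap_seg[OF i] by blast
    have x3: "a k < x" "x < a (Suc k)" using x2 unfolding L by auto
    have hr: "h \<in> {1..n+2}" "h + 1 \<in> {1..n+2}" using h_range by auto
    have kr: "k \<in> {1..n+2}" "Suc k \<in> {1..n+2}" using k by auto
    show False
    proof (cases "k < h")
      case True
      then have "a (Suc k) \<le> a h" using a_le_iff[OF kr(2) hr(1)] by simp
      then show False using x1 x3 by auto
    next
      case False
      then have "h + 1 \<le> k" using k by auto
      then have "a (h+1) \<le> a k" using a_le_iff[OF hr(2) kr(1)] by simp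
      then show False using x1 x3 by auto
    qed
  qed
  then show ?thesis unfolding F_img_def by blast
qed

lemma F_img_lap:
  assumes k: "k \<in> {1..n+1} - {h}" and i: "i < n + 1"
  shows "{a (i+1) <..< a (i+2)} \<subseteq> F_img n rho vr a {a k <..< a (Suc k)}"
proof
  fix y assume y: "y \<in> {a (i+1) <..< a (i+2)}"
  have "a 1 \<le> a (i+1)" "a (i+2) \<le> a (n+2)" using a_le_iff[of 1 "i+1"] a_le_iff[of "i+2" "n+2"] i by auto
  then have y1: "a 1 < y" "y < a (n+2)" using y by auto
  let ?l = "io k"
  define x where "x = rho ?l * y + vr ?l"
  have nz: "rho ?l \<noteq> 0" using rho_nz io_props(1)[OF k] by blast
  have xin: "x \<in> {a k <..< a (Suc k)}"
  proof (cases "0 < rho ?l")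
    case True
    have "rho ?l * a 1 < rho ?l * y" "rho ?l * y < rho ?l * a (n+2)" using y1 True by simp_all
    then show ?thesis using io_lin(1)[OF k True] unfolding x_def by auto
  next
    case False
    then have neg: "rho ?l < 0" using nz by simp
    have "rho ?l * a (n+2) < rho ?l * y" "rho ?l * y < rho ?l * a 1" using y1 neg by simp_all
    then show ?thesis using io_lin(2)[OF k neg] unfolding x_def by auto
  qed
  have "interior (lap ?l) = {a k <..< a (Suc k)}" unfolding io_props(2)[OF k] by simp
  then have "x \<in> interior (lap ?l)" using xin by simp
  moreover have "y = (x - vr ?l) / rho ?l" unfolding x_def using nz by simp
  ultimately show "y \<in> F_img n rho vr a {a k <..< a (Suc k)}"
    unfolding F_img_def using xin io_props(1)[OF k] by blast
qed

lemma lap_of_set_eq: assumes k: "k \<in> {1..n+1} - {h}"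
  shows "lap_of_set n rho vr a {a k <..< a (Suc k)} = io k"
  unfolding lap_of_set_def
proof (rule the_equality)
  show "io k \<in> {1..n} \<and> {a k <..< a (Suc k)} \<subseteq> lap (io k)"
    using io_props[OF k] by auto
next
  fix i assume H: "i \<in> {1..n} \<and> {a k <..< a (Suc k)} \<subseteq> lap i"
  obtain k' where k': "k' \<in> {1..n+1} - {h}" and L: "lap i = {a k' .. a (Suc k')}" using lap_seg H by blast
  have ak: "a k < a (Suc k)" using a_mono k by auto
  have "closure {a k <..< a (Suc k)} \<subseteq> closure {a k' .. a (Suc k')}"
    using H unfolding L by (intro closure_mono) simp
  then have "{a k .. a (Suc k)} \<subseteq> {a k' .. a (Suc k')}" using ak by simp
  then have "a k' \<le> a k" "a (Suc k) \<le> a (Suc k')" using ak by auto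
  then have "k' \<le> k" "Suc k \<le> Suc k'" using a_le_iff[of k' k] a_le_iff[of "Suc k" "Suc k'"] k k' by auto
  then have kk: "k' = k" by simp
  have L': "lap i = {a k .. a (Suc k)}" using L unfolding kk .
  have "io k = i" using io_unique[OF k _ L'] H by blast
  then show "i = io k" by simp
qed

lemma abs_wv: "j < n+1 \<Longrightarrow> j \<noteq> h - 1 \<Longrightarrow> \<bar>wv j\<bar> = \<bar>1 / rho (io (j+1))\<bar> powr (- \<beta>)"
proof -
  assume j: "j < n+1" "j \<noteq> h - 1"
  have k: "j + 1 \<in> {1..n+1} - {h}" using j h_range by auto
  have nz: "rho (io (j+1)) \<noteq> 0" using rho_nz io_props(1)[OF k] by blast
  show ?thesis unfolding wv_def Let_def using nz by (simp add: abs_mult abs_sgn_eq)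
qed

lemma Q_entry:
  assumes i': "i < n+1" and j': "j < n+1"
  shows "(if {nth_real (part_pts n rho vr a) i<..<nth_real (part_pts n rho vr a) (Suc i)}
              \<subseteq> F_img n rho vr a {nth_real (part_pts n rho vr a) j<..<nth_real (part_pts n rho vr a) (Suc j)}
           then 1 else 0) *
          \<bar>1 / rho (lap_of_set n rho vr a {nth_real (part_pts n rho vr a) j<..<nth_real (part_pts n rho vr a) (Suc j)})\<bar> powr (- \<beta>)
      = (if j = h - 1 then 0 else \<bar>wv j\<bar>)"
proof -
  have nr: "nth_real (part_pts n rho vr a) i = a (i+1)" "nth_real (part_pts n rho vr a) (Suc i) = a (i+2)"
    "nth_real (part_pts n rho vr a) j = a (j+1)" "nth_real (part_pts n rho vr a) (Suc j) = a (Suc (j+1))"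
    using nth_real_eq i' j' by auto
  have "a (i+1) < a (i+1+1)" using bspec[OF a_mono, of "i+1"] i' by simp
  then have ne: "{a (i+1) <..< a (i+2)} \<noteq> {}" by simp
  show ?thesis unfolding nr
  proof (cases "j = h - 1")
    case True
    then have "j + 1 = h" using h_range by auto
    then have "F_img n rho vr a {a (j+1) <..< a (Suc (j+1))} = {}" using F_img_hole by simp
    then show "(if {a (i+1) <..< a (i+2)} \<subseteq> F_img n rho vr a {a (j+1) <..< a (Suc (j+1))} then 1 else 0)
      * \<bar>1 / rho (lap_of_set n rho vr a {a (j+1) <..< a (Suc (j+1))})\<bar> powr (- \<beta>)
      = (if j = h - 1 then 0 else \<bar>wv j\<bar>)" using ne True by simp
  next
    case False
    have k: "j + 1 \<in> {1..n+1} - {h}" using False j' h_range by auto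
    show "(if {a (i+1) <..< a (i+2)} \<subseteq> F_img n rho vr a {a (j+1) <..< a (Suc (j+1))} then 1 else 0)
      * \<bar>1 / rho (lap_of_set n rho vr a {a (j+1) <..< a (Suc (j+1))})\<bar> powr (- \<beta>)
      = (if j = h - 1 then 0 else \<bar>wv j\<bar>)"
      using F_img_lap[OF k i'] lap_of_set_eq[OF k] abs_wv[OF j' False] False by simp
  qed
qed

lemma Qmat_eq: "Qmat n rho vr a \<beta> = Qf (n+1) (h-1) wv"
  apply (unfold Qmat_def Let_def Qf_def)
  apply (rule eq_matI)
  subgoal for i j
    apply (subst index_mat(1), simp add: card_P, simp add: card_P)
    apply (subst index_mat(1), simp, simp)
    apply (simp only: case_prod_conv)
    apply (rule Q_entry) by auto
  by (auto simp: card_P)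

end



context ctx begin

lemma lap_ifs_eq: "lap_ifs n rho vr a h k = io (lap_left h k)"
  unfolding lap_ifs_def iota_def ..

lemma lap_left_ge: "1 \<le> lap_left h k"
  unfolding lap_left_def by auto

lemma K_entry: "i < n \<Longrightarrow> j < n \<Longrightarrow> Kmat n rho vr a h \<beta> $$ (i,j) = (if i = j then wv (lap_left h i - 1) else 0)"
proof -
  assume i: "i < n" and j: "j < n"
  have e: "lap_left h i - 1 + 1 = lap_left h i" using lap_left_ge[of i] by simp
  show ?thesis unfolding Kmat_def wv_def e using i j by (simp add: lap_ifs_eq)
qed

lemma K_det: "det (1\<^sub>m n - t \<cdot>\<^sub>m Kmat n rho vr a h \<beta>) = (\<Prod>k<n. 1 - t * wv (lap_left h k - 1))"
proof -
  have Kc: "Kmat n rho vr a h \<beta> \<in> carrier_mat n n" by (simp add: Kmat_def)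
  have AKc: "1\<^sub>m n - t \<cdot>\<^sub>m Kmat n rho vr a h \<beta> \<in> carrier_mat n n"
    by (intro minus_carrier_mat smult_carrier_mat Kc)
  have ent: "(1\<^sub>m n - t \<cdot>\<^sub>m Kmat n rho vr a h \<beta>) $$ (i,j) = (if i = j then 1 - t * wv (lap_left h i - 1) else 0)"
    if "i < n" "j < n" for i j
  proof -
    have "(1\<^sub>m n - t \<cdot>\<^sub>m Kmat n rho vr a h \<beta>) $$ (i,j) = 1\<^sub>m n $$ (i,j) - t * Kmat n rho vr a h \<beta> $$ (i,j)"
      using that Kc by simp
    then show ?thesis using that K_entry[OF that] by simp
  qed
  have ut: "upper_triangular (1\<^sub>m n - t \<cdot>\<^sub>m Kmat n rho vr a h \<beta>)"
  proof (rule upper_triangularI)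
    fix i j assume ji: "j < i" and i: "i < dim_row (1\<^sub>m n - t \<cdot>\<^sub>m Kmat n rho vr a h \<beta>)"
    have im: "i < n" using i Kc by simp
    show "(1\<^sub>m n - t \<cdot>\<^sub>m Kmat n rho vr a h \<beta>) $$ (i,j) = 0" using ent[OF im] im ji by simp
  qed
  have "det (1\<^sub>m n - t \<cdot>\<^sub>m Kmat n rho vr a h \<beta>) = prod_list (diag_mat (1\<^sub>m n - t \<cdot>\<^sub>m Kmat n rho vr a h \<beta>))"
    by (rule det_upper_triangular[OF ut AKc])
  also have "\<dots> = prod_list (map (\<lambda>k. 1 - t * wv (lap_left h k - 1)) [0..<n])"
  proof -
    have dr: "dim_row (1\<^sub>m n - t \<cdot>\<^sub>m Kmat n rho vr a h \<beta>) = n" using Kc by simp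
    show ?thesis unfolding diag_mat_def dr
      by (intro arg_cong[where f=prod_list] map_cong) (auto simp: ent)
  qed
  also have "\<dots> = (\<Prod>k<n. 1 - t * wv (lap_left h k - 1))"
    by (simp add: prod.distinct_set_conv_list[symmetric] lessThan_atLeast0)
  finally show ?thesis .
qed

lemma prod_reidx: "(\<Prod>s<n+1. 1 - t * (if s = h - 1 then 0 else wv s)) = (\<Prod>k<n. 1 - t * wv (lap_left h k - 1))"
proof -
  define g where "g k = lap_left h k - 1" for k
  have g: "g k = (if Suc k < h then k else k + 1)" for k unfolding g_def lap_left_def by simp
  have hm: "h - 1 \<in> {..<n+1}" using h_range by auto
  have "(\<Prod>s<n+1. 1 - t * (if s = h - 1 then 0 else wv s))
      = (1 - t * (if h - 1 = h - 1 then 0 else wv (h-1))) * (\<Prod>s\<in>{..<n+1} - {h-1}. 1 - t * (if s = h - 1 then 0 else wv s))"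
    by (rule prod.remove[OF _ hm]) simp
  also have "\<dots> = (\<Prod>s\<in>{..<n+1} - {h-1}. 1 - t * wv s)"
  proof -
    have "(\<Prod>s\<in>{..<n+1} - {h-1}. 1 - t * (if s = h - 1 then 0 else wv s)) = (\<Prod>s\<in>{..<n+1} - {h-1}. 1 - t * wv s)"
      by (rule prod.cong) auto
    then show ?thesis by simp
  qed
  also have "\<dots> = (\<Prod>k<n. 1 - t * wv (g k))"
  proof -
    have bij: "bij_betw g {..<n} ({..<n+1} - {h-1})"
    proof (rule bij_betw_imageI)
      show "inj_on g {..<n}"
      proof (rule inj_onI)
        fix x y assume "x \<in> {..<n}" "y \<in> {..<n}" "g x = g y"
        then show "x = y" unfolding g by (auto split: if_splits)
      qed
      show "g ` {..<n} = {..<n+1} - {h-1}"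
      proof
        show "g ` {..<n} \<subseteq> {..<n+1} - {h-1}" using h_range unfolding g by auto
        show "{..<n+1} - {h-1} \<subseteq> g ` {..<n}"
        proof
          fix s assume s: "s \<in> {..<n+1} - {h-1}"
          show "s \<in> g ` {..<n}"
          proof (cases "s < h - 1")
            case True
            then have "g s = s" "s < n" using h_range unfolding g by auto
            then show ?thesis by (metis imageI lessThan_iff)
          next
            case False
            then have "s \<ge> h" "s \<ge> 1" using s h_range by auto
            then have "g (s - 1) = s" "s - 1 < n" using s unfolding g by auto
            then show ?thesis by (metis imageI lessThan_iff)
          qed
        qed
      qed
    qed
    show ?thesis using prod.reindex_bij_betw[OF bij, of "\<lambda>s. 1 - t * wv s"] by simp
  qed
  finally show ?thesis unfolding g_def .
qed

lemma absw: "\<forall>j<n+1. j \<noteq> h - 1 \<longrightarrow> \<bar>wv j\<bar> = (if eps j then wv j else - wv j)"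
proof (intro allI impI)
  fix j assume j: "j < n+1" "j \<noteq> h - 1"
  have k: "j + 1 \<in> {1..n+1} - {h}" using j h_range by auto
  have nz: "rho (io (j+1)) \<noteq> 0" using rho_nz io_props(1)[OF k] by blast
  have pw: "0 \<le> \<bar>1 / rho (io (j+1))\<bar> powr (- \<beta>)" by simp
  show "\<bar>wv j\<bar> = (if eps j then wv j else - wv j)"
  proof (cases "0 < rho (io (j+1))")
    case True
    then show ?thesis unfolding wv_def eps_def Let_def using pw by simp
  next
    case False
    then have "rho (io (j+1)) < 0" using nz by simp
    then show ?thesis unfolding wv_def eps_def Let_def using pw by simp
  qed
qed

theorem main: "det (1\<^sub>m (card (Ypts n rho vr a)) - t \<cdot>\<^sub>m Vmat n rho vr a \<beta>)
         = det (1\<^sub>m (card (part_pts n rho vr a) - 1) - t \<cdot>\<^sub>m Qmat n rho vr a \<beta>)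
           * det (1\<^sub>m n - t \<cdot>\<^sub>m Kmat n rho vr a h \<beta>)"
proof -
  have cY: "card (Ypts n rho vr a) = 2*(n+1)" using card_Y by simp
  have cP: "card (part_pts n rho vr a) - 1 = n + 1" using card_P by simp
  have m2: "2 \<le> n + 1" using n_pos by simp
  show ?thesis
    unfolding cY cP Vmat_eq Qmat_eq K_det prod_reidx[symmetric]
    by (rule core_det[OF m2 absw])
qed

end

theorem theorem1:
  fixes n h :: nat and rho vr a :: "nat \<Rightarrow> real" and \<beta> :: real
  assumes n_pos: "1 \<le> n"
    and contr: "\<forall>i\<in>{1..n}. 0 < \<bar>rho i\<bar> \<and> \<bar>rho i\<bar> < 1"
    and a_mono: "\<forall>k\<in>{1..n+1}. a k < a (k+1)"
    and h_range: "h \<in> {1..n+1}"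
    and tiling: "bij_betw (\<lambda>i. ifs rho vr i ` Ival n a) {1..n}
                   ((\<lambda>k. {a k .. a (k+1)}) ` ({1..n+1} - {h}))"
    and finite_orbits: "\<forall>p0\<in>init_pts n a. finite (orbit n rho vr a p0)"
  shows "\<forall>t::real.
           det (1\<^sub>m (card (Ypts n rho vr a)) - t \<cdot>\<^sub>m Vmat n rho vr a \<beta>)
         = det (1\<^sub>m (card (part_pts n rho vr a) - 1) - t \<cdot>\<^sub>m Qmat n rho vr a \<beta>)
           * det (1\<^sub>m n - t \<cdot>\<^sub>m Kmat n rho vr a h \<beta>)"
proof
  fix t :: real
  interpret ctx n h rho vr a \<beta> by (rule ctx.intro[OF n_pos contr a_mono h_range tiling])
  show "det (1\<^sub>m (card (Ypts n rho vr a)) - t \<cdot>\<^sub>m Vmat n rho vr a \<beta>)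
         = det (1\<^sub>m (card (part_pts n rho vr a) - 1) - t \<cdot>\<^sub>m Qmat n rho vr a \<beta>)
           * det (1\<^sub>m n - t \<cdot>\<^sub>m Kmat n rho vr a h \<beta>)"
    by (rule main)
qed


end
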